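(* Let $U\subset\mathbb{R}^s$ be open, $X:U\to\mathbb{R}^{n+1}_1$ a spacelike embedding, $M=X(U)$, $n^T$ a smooth future directed unit timelike normal field, and $H:U\times\mathbb{S}^{n-1}_+\to\mathbb{R}$, $H(u,v)=\langle X(u),v\rangle$, with $h_v=H(\cdot,v)$. Let $u_0\in U$, $p_0=X(u_0)$, $v_0\in\mathbb{S}^{n-1}_+$. Then: (1) $\frac{\partial H}{\partial u_i}(u_0,v_0)=0$ for all $i=1,\dots,s$ if and only if there exists $\xi_0\in N_1(M)_{p_0}[n^T]$ with $v_0=\widetilde{\mathbb{LG}}(n^T)(p_0,\xi_0)$. Suppose now $v_0=\widetilde{\mathbb{LG}}(n^T)(p_0,\xi_0)$ with $\xi_0\in N_1(M)_{p_0}[n^T]$, and let $n^S$ be a local smooth section of $N_1(M)[n^T]$ with $n^S(u_0)=\xi_0$. Then (2) $p_0$ is a $(n^T(u_0),\xi_0)$-parabolic point (i.e. $K_\ell(n^T,n^S)(u_0)=0$) if and only if $\det\mathrm{Hess}(h_{v_0})(u_0)=0$; (3) $p_0$ is a flat $(n^T(u_0),\xi_0)$-umbilical point (i.e. $S_{p_0}(n^T,n^S)=0$) if and only if $\mathrm{rank}\,\mathrm{Hess}(h_{v_0})(u_0)=0$; (4) $u_0$ is a non-degenerate critical point of $h_{v_0}$ if and only if $(p_0,\xi_0)$ is a regular point of $\widetilde{\mathbb{LG}}(n^T)$.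
   Context: $\mathbb{R}^{n+1}_1$ is $\mathbb{R}^{n+1}$ with $\langle x,y\rangle=-x_0y_0+\sum_{i=1}^n x_iy_i$; spacelike embedding means tangent spaces consist of vectors with $\langle v,v\rangle>0$. $\mathbb{S}^{n-1}_+=\{x:\langle x,x\rangle=0,x_0=1\}$; for nonzero lightlike $x$, $\widetilde x=x/x_0$. $N_p(M)$ is the pseudo-orthogonal complement of $T_pM$; $n^T(u)\in N_{X(u)}(M)$, $\langle n^T,n^T\rangle=-1$, $n^T_0>0$. $N_1(M)_p[n^T]=\{\xi\in N_p(M):\langle\xi,\xi\rangle=1,\langle\xi,n^T(p)\rangle=0\}$, $N_1(M)[n^T]=\bigcup_pN_1(M)_p[n^T]$, and $\widetilde{\mathbb{LG}}(n^T):N_1(M)[n^T]\to\mathbb{S}^{n-1}_+$, $(p,\xi)\mapsto\widetilde{n^T(p)+\xi}$ (a map between $(n-1)$-manifolds). With $\pi^\tau:T_pM\oplus N_p(M)\to T_pM$ the projection, $S_p(n^T,n^S)=-\pi^\tau\circ d_p(n^T+n^S)$ and $K_\ell(n^T,n^S)=\det S_p(n^T,n^S)$; these depend at $u_0$ only on $n^T(u_0)$ and $n^S(u_0)$. *)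

theory Defs
  imports "HOL-Analysis.Analysis"
begin

text \<open>Minkowski space R^{n+1}_1 is modelled as real \<times> real^'n : the first component is x_0,
  the second is (x_1,...,x_n). Hence n = CARD('n).\<close>

type_synonym 'n mink = "real \<times> (real^('n::finite))"

definition lor :: "('n::finite) mink \<Rightarrow> 'n mink \<Rightarrow> real" where
  "lor x y = - fst x * fst y + snd x \<bullet> snd y"

definition lightcone_sphere :: "('n::finite) mink set" where
  "lightcone_sphere = {x. lor x x = 0 \<and> fst x = 1}"

definition ltilde :: "('n::finite) mink \<Rightarrow> 'n mink" where
  "ltilde x = (1 / fst x) *\<^sub>R x"

text \<open>C^k on a set (used on open sets): continuity, and for k+1 differentiability plus all
  directional derivative functions being C^k.\<close>
fun Ck_on :: "nat \<Rightarrow> 'a::real_normed_vector set \<Rightarrow> ('a \<Rightarrow> 'b::real_normed_vector) \<Rightarrow> bool" where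
  "Ck_on 0 S f = continuous_on S f"
| "Ck_on (Suc k) S f = (f differentiable_on S \<and>
      (\<forall>w. Ck_on k S (\<lambda>x. frechet_derivative f (at x) w)))"

definition smooth_on :: "'a::real_normed_vector set \<Rightarrow> ('a \<Rightarrow> 'b::real_normed_vector) \<Rightarrow> bool" where
  "smooth_on S f \<longleftrightarrow> (\<forall>k. Ck_on k S f)"

definition pderiv :: "(real^('s::finite) \<Rightarrow> real) \<Rightarrow> real^'s \<Rightarrow> 's \<Rightarrow> real" where
  "pderiv f u i = frechet_derivative f (at u) (axis i 1)"

definition hessian :: "(real^('s::finite) \<Rightarrow> real) \<Rightarrow> real^'s \<Rightarrow> real^'s^'s" where
  "hessian f u = (\<chi> i j. pderiv (\<lambda>x. pderiv f x j) u i)"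

definition nondegenerate_critical_point :: "(real^('s::finite) \<Rightarrow> real) \<Rightarrow> real^'s \<Rightarrow> bool" where
  "nondegenerate_critical_point f u \<longleftrightarrow>
     (\<forall>i. pderiv f u i = 0) \<and> det (hessian f u) \<noteq> 0"

definition tan_space :: "(real^('s::finite) \<Rightarrow> ('n::finite) mink) \<Rightarrow> real^'s \<Rightarrow> 'n mink set" where
  "tan_space X u = range (frechet_derivative X (at u))"

definition nor_space :: "(real^('s::finite) \<Rightarrow> ('n::finite) mink) \<Rightarrow> real^'s \<Rightarrow> 'n mink set" where
  "nor_space X u = {\<nu>. \<forall>t\<in>tan_space X u. lor \<nu> t = 0}"

definition spacelike_embedding :: "(real^('s::finite)) set \<Rightarrow> (real^'s \<Rightarrow> ('n::finite) mink) \<Rightarrow> bool" where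
  "spacelike_embedding U X \<longleftrightarrow>
     smooth_on U X \<and>
     homeomorphism U (X ` U) X (inv_into U X) \<and>
     (\<forall>u\<in>U. inj (frechet_derivative X (at u))) \<and>
     (\<forall>u\<in>U. \<forall>t\<in>tan_space X u. t \<noteq> 0 \<longrightarrow> lor t t > 0)"

definition future_unit_timelike_normal :: "(real^('s::finite)) set \<Rightarrow> (real^'s \<Rightarrow> ('n::finite) mink) \<Rightarrow> (real^'s \<Rightarrow> 'n mink) \<Rightarrow> bool" where
  "future_unit_timelike_normal U X nT \<longleftrightarrow>
     smooth_on U nT \<and>
     (\<forall>u\<in>U. nT u \<in> nor_space X u \<and> lor (nT u) (nT u) = -1 \<and> fst (nT u) > 0)"

definition N1 :: "(real^('s::finite) \<Rightarrow> ('n::finite) mink) \<Rightarrow> (real^'s \<Rightarrow> 'n mink) \<Rightarrow> real^'s \<Rightarrow> 'n mink set" where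
  "N1 X nT u = {\<xi> \<in> nor_space X u. lor \<xi> \<xi> = 1 \<and> lor \<xi> (nT u) = 0}"

definition N1_bundle :: "(real^('s::finite)) set \<Rightarrow> (real^'s \<Rightarrow> ('n::finite) mink) \<Rightarrow> (real^'s \<Rightarrow> 'n mink) \<Rightarrow> ('n mink \<times> 'n mink) set" where
  "N1_bundle U X nT = {(X u, \<xi>) | u \<xi>. u \<in> U \<and> \<xi> \<in> N1 X nT u}"

definition LGt :: "(real^('s::finite)) set \<Rightarrow> (real^'s \<Rightarrow> ('n::finite) mink) \<Rightarrow> (real^'s \<Rightarrow> 'n mink) \<Rightarrow> 'n mink \<times> 'n mink \<Rightarrow> 'n mink" where
  "LGt U X nT pxi = ltilde (nT (inv_into U X (fst pxi)) + snd pxi)"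

definition local_section :: "(real^('s::finite)) set \<Rightarrow> (real^'s \<Rightarrow> ('n::finite) mink) \<Rightarrow> (real^'s \<Rightarrow> 'n mink) \<Rightarrow> (real^'s) set \<Rightarrow> (real^'s \<Rightarrow> 'n mink) \<Rightarrow> bool" where
  "local_section U X nT V nS \<longleftrightarrow>
     open V \<and> V \<subseteq> U \<and> smooth_on V nS \<and> (\<forall>u\<in>V. nS u \<in> N1 X nT u)"

definition proj_tan :: "(real^('s::finite) \<Rightarrow> ('n::finite) mink) \<Rightarrow> real^'s \<Rightarrow> 'n mink \<Rightarrow> 'n mink" where
  "proj_tan X u w = (THE t. t \<in> tan_space X u \<and> w - t \<in> nor_space X u)"

text \<open>S_p(n^T,n^S) = - pi^tau o d_p(n^T + n^S), acting on w in T_pM, p = X(u).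
  Here nu = n^T + n^S as a function of the parameter u; d_p nu (dX_u a) = d nu_u a.\<close>
definition shape_op :: "(real^('s::finite) \<Rightarrow> ('n::finite) mink) \<Rightarrow> (real^'s \<Rightarrow> 'n mink) \<Rightarrow> real^'s \<Rightarrow> 'n mink \<Rightarrow> 'n mink" where
  "shape_op X \<nu> u w =
     - proj_tan X u (frechet_derivative \<nu> (at u) (THE a. frechet_derivative X (at u) a = w))"

definition shape_matrix :: "(real^('s::finite) \<Rightarrow> ('n::finite) mink) \<Rightarrow> (real^'s \<Rightarrow> 'n mink) \<Rightarrow> real^'s \<Rightarrow> real^'s^'s" where
  "shape_matrix X \<nu> u = (THE A. \<forall>j. shape_op X \<nu> u (frechet_derivative X (at u) (axis j 1)) =
       (\<Sum>i\<in>UNIV. A$i$j *\<^sub>R frechet_derivative X (at u) (axis i 1)))"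

definition K_ell :: "(real^('s::finite) \<Rightarrow> ('n::finite) mink) \<Rightarrow> (real^'s \<Rightarrow> 'n mink) \<Rightarrow> (real^'s \<Rightarrow> 'n mink) \<Rightarrow> real^'s \<Rightarrow> real" where
  "K_ell X nT nS u = det (shape_matrix X (\<lambda>x. nT x + nS x) u)"

definition flat_umbilical :: "(real^('s::finite) \<Rightarrow> ('n::finite) mink) \<Rightarrow> (real^'s \<Rightarrow> 'n mink) \<Rightarrow> (real^'s \<Rightarrow> 'n mink) \<Rightarrow> real^'s \<Rightarrow> bool" where
  "flat_umbilical X nT nS u \<longleftrightarrow> (\<forall>w\<in>tan_space X u. shape_op X (\<lambda>x. nT x + nS x) u w = 0)"

definition curve_through :: "'a::real_normed_vector set \<Rightarrow> 'a \<Rightarrow> (real \<Rightarrow> 'a) \<Rightarrow> bool" where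
  "curve_through A a \<gamma> \<longleftrightarrow>
     (\<exists>e>0. smooth_on {-e<..<e} \<gamma> \<and> \<gamma> ` {-e<..<e} \<subseteq> A) \<and> \<gamma> 0 = a"

definition tangent_set :: "'a::real_normed_vector set \<Rightarrow> 'a \<Rightarrow> 'a set" where
  "tangent_set A a = {vector_derivative \<gamma> (at 0) | \<gamma>. curve_through A a \<gamma>}"

definition differential_image :: "'a::real_normed_vector set \<Rightarrow> ('a \<Rightarrow> 'b::real_normed_vector) \<Rightarrow> 'a \<Rightarrow> 'b set" where
  "differential_image A F a = {vector_derivative (F \<circ> \<gamma>) (at 0) | \<gamma>. curve_through A a \<gamma>}"

definition regular_point :: "'a::real_normed_vector set \<Rightarrow> 'b::real_normed_vector set \<Rightarrow> ('a \<Rightarrow> 'b) \<Rightarrow> 'a \<Rightarrow> bool" where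
  "regular_point A B F a \<longleftrightarrow> differential_image A F a = tangent_set B (F a)"

end

theory Submission
  imports Defs
begin

lemma Ck_on_cong_aux:
  assumes "open S" "\<And>x. x \<in> S \<Longrightarrow> f x = g x" "Ck_on k S f"
  shows "Ck_on k S g"
  using assms(2,3)
proof (induction k arbitrary: f g)
  case 0
  then show ?case using continuous_on_cong by auto
next
  case (Suc k)
  from Suc.prems have fd: "f differentiable_on S" and fC: "\<And>w. Ck_on k S (\<lambda>x. frechet_derivative f (at x) w)"
    by auto
  have hd: "(g has_derivative frechet_derivative f (at x)) (at x)" if "x \<in> S" for x
  proof -
    have "f differentiable (at x)" using fd that assms(1) differentiable_on_eq_differentiable_at by blast
    hence "(f has_derivative frechet_derivative f (at x)) (at x)" using frechet_derivative_works by blast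
    thus ?thesis using has_derivative_transform_within_open[OF _ assms(1) that] Suc.prems(1) by blast
  qed
  have "g differentiable_on S" using hd assms(1) differentiable_on_eq_differentiable_at
    unfolding differentiable_def by blast
  moreover have "Ck_on k S (\<lambda>x. frechet_derivative g (at x) w)" for w
    apply (rule Suc.IH[OF _ fC[of w]])
    using hd frechet_derivative_at by metis
  ultimately show ?case by simp
qed

lemma Ck_on_cong:
  assumes "open S" "\<And>x. x \<in> S \<Longrightarrow> f x = g x"
  shows "Ck_on k S f = Ck_on k S g"
  using Ck_on_cong_aux[OF assms(1)] assms(2) by metis

lemma Ck_on_SucI:
  assumes "open S" "\<And>x. x \<in> S \<Longrightarrow> (f has_derivative f' x) (at x)"
    "\<And>w. Ck_on k S (\<lambda>x. f' x w)"
  shows "Ck_on (Suc k) S f"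
proof -
  have "f differentiable_on S" using assms(1,2) differentiable_on_eq_differentiable_at
    unfolding differentiable_def by blast
  moreover have "Ck_on k S (\<lambda>x. frechet_derivative f (at x) w)" for w
    using Ck_on_cong[OF assms(1), of "\<lambda>x. frechet_derivative f (at x) w" "\<lambda>x. f' x w"] assms(2,3)
      frechet_derivative_at by metis
  ultimately show ?thesis by simp
qed

lemma Ck_on_SucD:
  assumes "open S" "Ck_on (Suc k) S f" "x \<in> S"
  shows "(f has_derivative frechet_derivative f (at x)) (at x)"
proof -
  have "f differentiable_on S" using assms(2) by simp
  hence "f differentiable (at x)" using differentiable_on_eq_differentiable_at assms(1,3) by blast
  thus ?thesis using frechet_derivative_works by blast
qed

lemma Ck_on_Suc_mono: "Ck_on (Suc k) S f \<Longrightarrow> Ck_on k S f"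
proof (induction k arbitrary: f)
  case 0
  then show ?case using differentiable_imp_continuous_on by auto
next
  case (Suc k)
  then show ?case by auto
qed

lemma Ck_on_le: "k \<le> m \<Longrightarrow> Ck_on m S f \<Longrightarrow> Ck_on k S f"
  by (induction m) (auto simp: le_Suc_eq simp del: Ck_on.simps dest: Ck_on_Suc_mono)

lemma Ck_on_const: "Ck_on k S (\<lambda>x. c)"
proof (induction k arbitrary: c)
  case 0
  then show ?case by simp
next
  case (Suc k)
  have "frechet_derivative (\<lambda>x. c) (at x) = (\<lambda>h. 0)" for x
    using frechet_derivative_at[OF has_derivative_const] by metis
  then show ?case using Suc by simp
qed

lemma Ck_on_add:
  assumes "open S" "Ck_on k S f" "Ck_on k S g"
  shows "Ck_on k S (\<lambda>x. f x + g x)"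
  using assms(2,3)
proof (induction k arbitrary: f g)
  case 0
  then show ?case by (simp add: continuous_on_add)
next
  case (Suc k)
  show ?case
    apply (rule Ck_on_SucI[OF assms(1), where f'="\<lambda>x h. frechet_derivative f (at x) h + frechet_derivative g (at x) h"])
    using Ck_on_SucD[OF assms(1) Suc.prems(1)] Ck_on_SucD[OF assms(1) Suc.prems(2)]
     apply (auto intro!: derivative_eq_intros)[1]
    using Suc by auto
qed

lemma Ck_on_linear:
  assumes "open S" "bounded_linear L" "Ck_on k S f"
  shows "Ck_on k S (\<lambda>x. L (f x))"
  using assms(3)
proof (induction k arbitrary: f)
  case 0
  then show ?case using bounded_linear.continuous_on[OF assms(2)] by simp
next
  case (Suc k)
  show ?case
    apply (rule Ck_on_SucI[OF assms(1), where f'="\<lambda>x h. L (frechet_derivative f (at x) h)"])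
    using Ck_on_SucD[OF assms(1) Suc.prems(1)] bounded_linear.has_derivative[OF assms(2)]
     apply blast
    using Suc by auto
qed

lemma Ck_on_bilinear:
  fixes f :: "'a::real_normed_vector \<Rightarrow> 'b::real_normed_vector" and g :: "'a \<Rightarrow> 'c::real_normed_vector"
    and prod :: "'b \<Rightarrow> 'c \<Rightarrow> 'd::real_normed_vector"
  assumes "open S" "bounded_bilinear prod" "Ck_on k S f" "Ck_on k S g"
  shows "Ck_on k S (\<lambda>x. prod (f x) (g x))"
  using assms(3,4)
proof (induction k arbitrary: f g)
  case 0
  then show ?case using bounded_bilinear.continuous_on[OF assms(2)] by simp
next
  case (Suc k)
  show ?case
    apply (rule Ck_on_SucI[OF assms(1), where f'="\<lambda>x h. prod (f x) (frechet_derivative g (at x) h) + prod (frechet_derivative f (at x) h) (g x)"])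
    using Ck_on_SucD[OF assms(1) Suc.prems(1)] Ck_on_SucD[OF assms(1) Suc.prems(2)]
      bounded_bilinear.FDERIV[OF assms(2)]
     apply blast
    apply (rule Ck_on_add[OF assms(1)])
     apply (rule Suc.IH[OF Ck_on_Suc_mono[OF Suc.prems(1)]]) using Suc.prems(2) apply simp
    apply (rule Suc.IH[OF _ Ck_on_Suc_mono[OF Suc.prems(2)]]) using Suc.prems(1) apply simp
    done
qed

lemma Ck_on_mult:
  fixes f g :: "'a::real_normed_vector \<Rightarrow> 'b::real_normed_algebra"
  shows "open S \<Longrightarrow> Ck_on k S f \<Longrightarrow> Ck_on k S g \<Longrightarrow> Ck_on k S (\<lambda>x. f x * g x)"
  using Ck_on_bilinear[OF _ bounded_bilinear_mult] by blast

lemma Ck_on_scaleR: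
  shows "open S \<Longrightarrow> Ck_on k S f \<Longrightarrow> Ck_on k S g \<Longrightarrow> Ck_on k S (\<lambda>x. f x *\<^sub>R g x)"
  using Ck_on_bilinear[OF _ bounded_bilinear_scaleR] by blast

lemma Ck_on_inner:
  shows "open S \<Longrightarrow> Ck_on k S f \<Longrightarrow> Ck_on k S g \<Longrightarrow> Ck_on k S (\<lambda>x. inner (f x) (g x))"
  using Ck_on_bilinear[OF _ bounded_bilinear_inner] by blast

lemma Ck_on_minus: "open S \<Longrightarrow> Ck_on k S f \<Longrightarrow> Ck_on k S (\<lambda>x. - f x)"
  using Ck_on_linear[of S "\<lambda>x. - x"] bounded_linear_minus[OF bounded_linear_ident] by auto

lemma Ck_on_diff: "open S \<Longrightarrow> Ck_on k S f \<Longrightarrow> Ck_on k S g \<Longrightarrow> Ck_on k S (\<lambda>x. f x - g x)"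
  using Ck_on_add[of S k f "\<lambda>x. - g x"] Ck_on_minus by auto

lemma Ck_on_fst: "open S \<Longrightarrow> Ck_on k S f \<Longrightarrow> Ck_on k S (\<lambda>x. fst (f x))"
  using Ck_on_linear bounded_linear_fst by blast
lemma Ck_on_snd: "open S \<Longrightarrow> Ck_on k S f \<Longrightarrow> Ck_on k S (\<lambda>x. snd (f x))"
  using Ck_on_linear bounded_linear_snd by blast
lemma Ck_on_component: "open S \<Longrightarrow> Ck_on k S f \<Longrightarrow> Ck_on k S (\<lambda>x. f x $ i)"
  using Ck_on_linear bounded_linear_vec_nth by blast

lemma Ck_on_pair:
  fixes f :: "'a::real_normed_vector \<Rightarrow> 'b::real_normed_vector" and g :: "'a \<Rightarrow> 'c::real_normed_vector"
  assumes "open S" "Ck_on k S f" "Ck_on k S g"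
  shows "Ck_on k S (\<lambda>x. (f x, g x))"
proof -
  have l1: "bounded_linear (\<lambda>y::'b. (y, 0::'c))"
    by (rule bounded_linear_Pair[OF bounded_linear_ident bounded_linear_zero])
  have l2: "bounded_linear (\<lambda>y::'c. (0::'b, y))"
    by (rule bounded_linear_Pair[OF bounded_linear_zero bounded_linear_ident])
  have "Ck_on k S (\<lambda>x. (f x, 0) + (0, g x))"
    apply (rule Ck_on_add[OF assms(1)])
    using Ck_on_linear[OF assms(1) l1 assms(2)] Ck_on_linear[OF assms(1) l2 assms(3)]
    by auto
  thus ?thesis by simp
qed

lemma Ck_on_sum:
  assumes "open S" "finite I" "\<And>i. i \<in> I \<Longrightarrow> Ck_on k S (f i)"
  shows "Ck_on k S (\<lambda>x. \<Sum>i\<in>I. f i x)"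
  using assms(2,3)
  by (induction I rule: finite_induct) (auto intro: Ck_on_add[OF assms(1)] Ck_on_const)

lemma Ck_on_prod:
  fixes f :: "'i \<Rightarrow> 'a::real_normed_vector \<Rightarrow> 'b::{real_normed_algebra,comm_ring_1}"
  assumes "open S" "finite I" "\<And>i. i \<in> I \<Longrightarrow> Ck_on k S (f i)"
  shows "Ck_on k S (\<lambda>x. \<Prod>i\<in>I. f i x)"
  using assms(2,3)
  by (induction I rule: finite_induct) (auto intro: Ck_on_mult[OF assms(1)] Ck_on_const)

lemma Ck_on_powr:
  fixes f :: "'a::real_normed_vector \<Rightarrow> real"
  assumes "open S" "Ck_on k S f" "\<And>x. x \<in> S \<Longrightarrow> f x > 0"
  shows "Ck_on k S (\<lambda>x. f x powr r)"
  using assms(2)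
proof (induction k arbitrary: r)
  case 0
  then show ?case using assms(3)
    apply simp
    apply (rule continuous_on_powr')
    using less_imp_le by (auto intro!: continuous_on_const dest: assms(3))
next
  case (Suc k)
  show ?case
    apply (rule Ck_on_SucI[OF assms(1), where f'="\<lambda>x h. (r * f x powr (r - 1)) * frechet_derivative f (at x) h"])
    subgoal for x
      using Ck_on_SucD[OF assms(1) Suc.prems(1), of x] assms(3)[of x]
      by (auto intro!: derivative_eq_intros simp: powr_diff field_simps)
    apply (rule Ck_on_mult[OF assms(1)])
     apply (rule Ck_on_mult[OF assms(1) Ck_on_const])
     apply (rule Suc.IH[OF Ck_on_Suc_mono[OF Suc.prems(1)]])
    using Suc.prems(1) by simp
qed

lemma Ck_on_affine:
  fixes f :: "'a::real_normed_vector \<Rightarrow> 'b::real_normed_vector"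
  assumes "open S" "open U" "\<And>t. t \<in> S \<Longrightarrow> p + t *\<^sub>R d \<in> U" "Ck_on k U f"
  shows "Ck_on k S (\<lambda>t. f (p + t *\<^sub>R d))"
  using assms(4)
proof (induction k arbitrary: f)
  case 0
  then show ?case
    apply simp
    apply (rule continuous_on_compose2[of U f])
    using assms(3) by (auto intro!: continuous_intros)
next
  case (Suc k)
  show ?case
    apply (rule Ck_on_SucI[OF assms(1), where f'="\<lambda>t h. h *\<^sub>R frechet_derivative f (at (p + t *\<^sub>R d)) d"])
    subgoal for t
      using Ck_on_SucD[OF assms(2) Suc.prems(1) assms(3)[of t]]
      apply -
      apply (rule has_derivative_eq_rhs)
       apply (rule has_derivative_compose[of "\<lambda>t. p + t *\<^sub>R d" _ _ _ f])
        apply (auto intro!: derivative_eq_intros)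
      using has_derivative_linear linear_cmul by blast
    apply (rule Ck_on_scaleR[OF assms(1) Ck_on_const])
    using Suc by auto
qed


definition Jm :: "('n::finite) mink \<Rightarrow> 'n mink" where "Jm x = (- fst x, snd x)"

lemma lor_Jm: "lor x y = inner (Jm x) y"
  by (simp add: lor_def Jm_def inner_prod_def)

lemma bounded_linear_Jm: "bounded_linear Jm"
  unfolding Jm_def
  by (intro bounded_linear_Pair bounded_linear_minus bounded_linear_fst bounded_linear_snd)

lemma bounded_bilinear_lor: "bounded_bilinear lor"
proof -
  have "bounded_bilinear (\<lambda>x. inner (Jm x))"
    by (rule bounded_bilinear.comp1[OF bounded_bilinear_inner bounded_linear_Jm])
  thus ?thesis unfolding lor_Jm[abs_def] .
qed

lemma lor_sym: "lor x y = lor y x" by (simp add: lor_def inner_commute mult.commute)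
lemma lor_add_left: "lor (x + y) z = lor x z + lor y z" by (simp add: lor_def inner_add_left algebra_simps)
lemma lor_add_right: "lor z (x + y) = lor z x + lor z y" by (simp add: lor_def inner_add_right algebra_simps)
lemma lor_diff_left: "lor (x - y) z = lor x z - lor y z" by (simp add: lor_def inner_diff_left algebra_simps)
lemma lor_diff_right: "lor z (x - y) = lor z x - lor z y" by (simp add: lor_def inner_diff_right algebra_simps)
lemma lor_scaleR_left: "lor (c *\<^sub>R x) z = c * lor x z" by (simp add: lor_def algebra_simps)
lemma lor_scaleR_right: "lor z (c *\<^sub>R x) = c * lor z x" by (simp add: lor_def algebra_simps)
lemma lor_minus_left: "lor (- x) z = - lor x z" by (simp add: lor_def algebra_simps)
lemma lor_minus_right: "lor z (- x) = - lor z x" by (simp add: lor_def algebra_simps)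
lemma lor_zero_left[simp]: "lor 0 z = 0" by (simp add: lor_def)
lemma lor_zero_right[simp]: "lor z 0 = 0" by (simp add: lor_def)
lemma lor_sum_left: "lor (\<Sum>i\<in>I. f i) z = (\<Sum>i\<in>I. lor (f i) z)"
  by (induction I rule: infinite_finite_induct) (auto simp: lor_add_left)
lemma lor_sum_right: "lor z (\<Sum>i\<in>I. f i) = (\<Sum>i\<in>I. lor z (f i))"
  by (induction I rule: infinite_finite_induct) (auto simp: lor_add_right)

lemmas lor_simps = lor_add_left lor_add_right lor_diff_left lor_diff_right lor_scaleR_left lor_scaleR_right
  lor_minus_left lor_minus_right lor_sum_left lor_sum_right

lemma timelike_perp:
  fixes n x :: "('n::finite) mink"
  assumes "lor n n = -1" "lor x n = 0"
  shows "lor x x \<ge> 0" "lor x x = 0 \<Longrightarrow> x = 0"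
proof -
  obtain a b where n: "n = (a, b)" by (cases n)
  obtain x0 y where x: "x = (x0, y)" by (cases x)
  have nb: "a^2 = 1 + (norm b)^2" using assms(1) n by (simp add: lor_def power2_norm_eq_inner power2_eq_square[symmetric])
  have xa: "x0 * a = inner y b" using assms(2) n x by (simp add: lor_def)
  have "(x0 * a)^2 \<le> (norm y)^2 * (norm b)^2"
    using xa Cauchy_Schwarz_ineq[of y b] by (simp add: power2_norm_eq_inner)
  hence "x0^2 * a^2 \<le> (norm y)^2 * (a^2 - 1)" using nb by (simp add: power_mult_distrib)
  hence key: "a^2 * ((norm y)^2 - x0^2) \<ge> (norm y)^2" by (simp add: algebra_simps)
  have a2: "a^2 \<ge> 1" using nb by simp
  have ll: "lor x x = (norm y)^2 - x0^2" using x by (simp add: lor_def power2_norm_eq_inner power2_eq_square[symmetric])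
  have "(norm y)^2 - x0^2 \<ge> 0"
  proof (rule ccontr)
    assume "\<not> ?thesis"
    hence "a^2 * ((norm y)^2 - x0^2) < 0" using a2 by (intro mult_pos_neg) auto
    thus False using key by (smt (verit) zero_le_power2)
  qed
  thus "lor x x \<ge> 0" using ll by simp
  assume "lor x x = 0"
  hence "(norm y)^2 - x0^2 = 0" using ll by simp
  hence "(norm y)^2 \<le> 0" using key by simp
  hence "(norm y)^2 = 0" by (smt (verit) zero_le_power2)
  hence "y = 0" by simp
  moreover have "x0 = 0" using xa \<open>y = 0\<close> a2 by (cases "a = 0") auto
  ultimately show "x = 0" using x by (simp add: zero_prod_def)
qed


definition cramer_sol :: "real^'n^'n \<Rightarrow> real^'n \<Rightarrow> real^'n" where
  "cramer_sol A b = (\<chi> k. det (\<chi> i j. if j = k then b$i else A$i$j) / det A)"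

lemma cramer_sol: "det A \<noteq> 0 \<Longrightarrow> A *v cramer_sol A b = b"
  using cramer[of A "cramer_sol A b" b] unfolding cramer_sol_def by simp

lemma det_zero_iff: "det (A::real^'n^'n) = 0 \<longleftrightarrow> (\<exists>x. x \<noteq> 0 \<and> A *v x = 0)"
  using det_eq_0_rank[of A] matrix_nonfull_linear_equations_eq[of A] rank_bound[of A] by auto

locale msetup =
  fixes U :: "(real^('s::finite)) set" and X :: "real^'s \<Rightarrow> ('n::finite) mink" and nT :: "real^'s \<Rightarrow> 'n mink"
  assumes openU: "open U" and emb: "spacelike_embedding U X" and fnT: "future_unit_timelike_normal U X nT"
begin

abbreviation DX where "DX u \<equiv> frechet_derivative X (at u)"
definition Xj :: "real^'s \<Rightarrow> 's \<Rightarrow> 'n mink" where "Xj u j = DX u (axis j 1)"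
definition gram :: "real^'s \<Rightarrow> real^'s^'s" where "gram u = (\<chi> i j. lor (Xj u i) (Xj u j))"

lemma smoothX: "smooth_on U X" using emb unfolding spacelike_embedding_def by simp

lemma CkX: "Ck_on k U X" using smoothX unfolding smooth_on_def by simp

lemma X_deriv: "u \<in> U \<Longrightarrow> (X has_derivative DX u) (at u)"
  using Ck_on_SucD[OF openU CkX[of "Suc 0"]] by simp

lemma linear_DX: "u \<in> U \<Longrightarrow> linear (DX u)"
  using X_deriv has_derivative_linear by blast

lemma vec_expand: "a = (\<Sum>j\<in>UNIV. a$j *\<^sub>R (axis j 1 :: real^'s))"
  using basis_expansion[of a] by (simp add: scalar_mult_eq_scaleR)

lemma linear_expand: "linear f \<Longrightarrow> f (a::real^'s) = (\<Sum>j\<in>UNIV. a$j *\<^sub>R f (axis j 1))"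
  by (subst vec_expand) (simp add: linear_sum linear_scale)

lemma DX_expand: "u \<in> U \<Longrightarrow> DX u a = (\<Sum>j\<in>UNIV. a$j *\<^sub>R Xj u j)"
  unfolding Xj_def using linear_expand[OF linear_DX] by blast

lemma DX_inj: "u \<in> U \<Longrightarrow> inj (DX u)"
  using emb unfolding spacelike_embedding_def by blast

lemma DX_zero: "u \<in> U \<Longrightarrow> DX u a = 0 \<longleftrightarrow> a = 0"
proof -
  assume u: "u \<in> U"
  have "DX u 0 = 0" using linear_0[OF linear_DX[OF u]] .
  thus ?thesis using DX_inj[OF u] unfolding inj_def by metis
qed

lemma DX_pos: "u \<in> U \<Longrightarrow> a \<noteq> 0 \<Longrightarrow> lor (DX u a) (DX u a) > 0"
  using emb DX_zero unfolding spacelike_embedding_def tan_space_def by blast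

lemma tan_nor_zero: "u \<in> U \<Longrightarrow> t \<in> tan_space X u \<Longrightarrow> t \<in> nor_space X u \<Longrightarrow> t = 0"
proof (rule ccontr)
  assume u: "u \<in> U" and t: "t \<in> tan_space X u" "t \<in> nor_space X u" and "t \<noteq> 0"
  hence "lor t t > 0" using emb u unfolding spacelike_embedding_def by blast
  moreover have "lor t t = 0" using t unfolding nor_space_def by blast
  ultimately show False by simp
qed

lemma nor_iff: "u \<in> U \<Longrightarrow> \<nu> \<in> nor_space X u \<longleftrightarrow> (\<forall>j. lor \<nu> (Xj u j) = 0)"
proof
  assume "\<nu> \<in> nor_space X u"
  thus "\<forall>j. lor \<nu> (Xj u j) = 0" unfolding nor_space_def tan_space_def Xj_def by blast
next
  assume u: "u \<in> U" and h: "\<forall>j. lor \<nu> (Xj u j) = 0"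
  have "lor \<nu> (DX u a) = 0" for a
    unfolding DX_expand[OF u] using h by (simp add: lor_simps)
  thus "\<nu> \<in> nor_space X u" unfolding nor_space_def tan_space_def by auto
qed

lemma nor_add: "a \<in> nor_space X u \<Longrightarrow> b \<in> nor_space X u \<Longrightarrow> a + b \<in> nor_space X u"
  by (auto simp: nor_space_def lor_simps)
lemma nor_diff: "a \<in> nor_space X u \<Longrightarrow> b \<in> nor_space X u \<Longrightarrow> a - b \<in> nor_space X u"
  by (auto simp: nor_space_def lor_simps)
lemma nor_scale: "a \<in> nor_space X u \<Longrightarrow> c *\<^sub>R a \<in> nor_space X u"
  by (auto simp: nor_space_def lor_simps)
lemma nor_zero: "0 \<in> nor_space X u"
  by (auto simp: nor_space_def)
lemma nor_sum: "(\<And>i. i \<in> I \<Longrightarrow> f i \<in> nor_space X u) \<Longrightarrow> (\<Sum>i\<in>I. f i) \<in> nor_space X u"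
  by (induction I rule: infinite_finite_induct) (auto intro: nor_add nor_zero)

lemma gram_mult: "u \<in> U \<Longrightarrow> (gram u *v c) $ i = lor (Xj u i) (DX u c)"
  by (simp add: gram_def matrix_vector_mult_def DX_expand lor_simps mult.commute)

lemma gram_det: "u \<in> U \<Longrightarrow> det (gram u) \<noteq> 0"
proof
  assume u: "u \<in> U" and "det (gram u) = 0"
  then obtain c where c: "c \<noteq> 0" "gram u *v c = 0" using det_zero_iff by blast
  have "lor (DX u c) (DX u c) = (\<Sum>i\<in>UNIV. c$i * lor (Xj u i) (DX u c))"
    apply (subst (1) DX_expand[OF u]) by (simp add: lor_sum_left lor_scaleR_left)
  also have "\<dots> = 0" using c(2) gram_mult[OF u, of c] by (simp add: vec_eq_iff)
  finally show False using DX_pos[OF u c(1)] by simp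
qed

lemma proj_exists: "u \<in> U \<Longrightarrow> \<exists>a. w - DX u a \<in> nor_space X u"
proof -
  assume u: "u \<in> U"
  define b where "b = (\<chi> i. lor (Xj u i) w)"
  define a where "a = cramer_sol (gram u) b"
  have "gram u *v a = b" unfolding a_def using cramer_sol gram_det[OF u] by blast
  hence "lor (Xj u i) (DX u a) = lor (Xj u i) w" for i
    using gram_mult[OF u, of a i] by (simp add: b_def)
  hence "w - DX u a \<in> nor_space X u"
    using u by (simp add: nor_iff lor_simps lor_sym)
  thus ?thesis by blast
qed

lemma proj_tan_eq: "u \<in> U \<Longrightarrow> w - DX u a \<in> nor_space X u \<Longrightarrow> proj_tan X u w = DX u a"
  unfolding proj_tan_def
proof (rule the_equality)
  assume u: "u \<in> U" and h: "w - DX u a \<in> nor_space X u"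
  show "DX u a \<in> tan_space X u \<and> w - DX u a \<in> nor_space X u" using h by (simp add: tan_space_def)
  fix t assume t: "t \<in> tan_space X u \<and> w - t \<in> nor_space X u"
  obtain b where b: "t = DX u b" using t unfolding tan_space_def by blast
  have "t - DX u a = DX u (b - a)" using b linear_diff[OF linear_DX[OF u]] by simp
  hence "t - DX u a \<in> tan_space X u" unfolding tan_space_def by blast
  moreover have "t - DX u a \<in> nor_space X u" using nor_diff[OF h, of "w - t"] t by simp
  ultimately have "t - DX u a = 0" using tan_nor_zero[OF u] by blast
  thus "t = DX u a" by simp
qed

lemma proj_tan_ex: "u \<in> U \<Longrightarrow> \<exists>a. proj_tan X u w = DX u a \<and> w - DX u a \<in> nor_space X u"
  using proj_exists proj_tan_eq by blast

lemma the_DX: "u \<in> U \<Longrightarrow> (THE a. DX u a = DX u b) = b"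
  using DX_inj by (auto simp: inj_eq)

lemma shape_op_DX: "u \<in> U \<Longrightarrow> shape_op X \<nu> u (DX u a) = - proj_tan X u (frechet_derivative \<nu> (at u) a)"
  unfolding shape_op_def using the_DX by simp

lemma shape_main:
  assumes u: "u \<in> U" and lin: "linear (frechet_derivative \<nu> (at u))"
  shows "shape_op X \<nu> u (DX u a) = DX u (shape_matrix X \<nu> u *v a)"
proof -
  define D where "D = frechet_derivative \<nu> (at u)"
  have "\<forall>j. \<exists>c. D (axis j 1) - DX u c \<in> nor_space X u" using proj_exists[OF u] by blast
  then obtain c where c: "\<And>j. D (axis j 1) - DX u (c j) \<in> nor_space X u" by metis
  define A :: "real^'s^'s" where "A = (\<chi> i j. - (c j $ i))"
  have sj: "shape_op X \<nu> u (DX u (axis j 1)) = (\<Sum>i\<in>UNIV. A$i$j *\<^sub>R DX u (axis i 1))" for j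
  proof -
    have "shape_op X \<nu> u (DX u (axis j 1)) = - DX u (c j)"
      using shape_op_DX[OF u] proj_tan_eq[OF u c] D_def by simp
    also have "\<dots> = (\<Sum>i\<in>UNIV. A$i$j *\<^sub>R DX u (axis i 1))"
      using linear_expand[OF linear_DX[OF u], of "c j"] by (simp add: A_def sum_negf[symmetric])
    finally show ?thesis .
  qed
  have uniq: "B = A" if hB: "\<forall>j. shape_op X \<nu> u (DX u (axis j 1)) = (\<Sum>i\<in>UNIV. B$i$j *\<^sub>R DX u (axis i 1))" for B
  proof -
    have "DX u (\<chi> i. B$i$j) = DX u (\<chi> i. A$i$j)" for j
      using hB sj[of j] linear_expand[OF linear_DX[OF u], of "\<chi> i. B$i$j"]
        linear_expand[OF linear_DX[OF u], of "\<chi> i. A$i$j"] by simp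
    hence "(\<chi> i. B$i$j) = (\<chi> i. A$i$j)" for j using DX_inj[OF u] by (simp add: inj_eq)
    thus ?thesis by (simp add: vec_eq_iff)
  qed
  have SM: "shape_matrix X \<nu> u = A"
    unfolding shape_matrix_def
    apply (rule the_equality) using sj uniq by auto
  have "D a - DX u (\<Sum>j\<in>UNIV. a$j *\<^sub>R c j) \<in> nor_space X u"
  proof -
    have "D a - DX u (\<Sum>j\<in>UNIV. a$j *\<^sub>R c j) = (\<Sum>j\<in>UNIV. a$j *\<^sub>R (D (axis j 1) - DX u (c j)))"
      using linear_expand[OF lin[folded D_def], of a] linear_DX[OF u]
      by (simp add: linear_sum linear_scale scaleR_diff_right sum_subtractf)
    thus ?thesis using c by (auto intro!: nor_sum nor_scale)
  qed
  hence "shape_op X \<nu> u (DX u a) = - DX u (\<Sum>j\<in>UNIV. a$j *\<^sub>R c j)"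
    using shape_op_DX[OF u] proj_tan_eq[OF u] D_def by simp
  also have "\<dots> = DX u (A *v a)"
  proof -
    have "A *v a = - (\<Sum>j\<in>UNIV. a$j *\<^sub>R c j)"
      by (simp add: A_def matrix_vector_mult_def vec_eq_iff sum_negf mult.commute)
    thus ?thesis using linear_DX[OF u] by (simp add: linear_neg)
  qed
  finally show ?thesis using SM by simp
qed

lemma lor_Dnu:
  assumes u: "u \<in> U" and lin: "linear (frechet_derivative \<nu> (at u))"
  shows "lor (Xj u j) (frechet_derivative \<nu> (at u) a) = - ((gram u ** shape_matrix X \<nu> u) *v a) $ j"
proof -
  define D where "D = frechet_derivative \<nu> (at u)"
  obtain b where b: "proj_tan X u (D a) = DX u b" "D a - DX u b \<in> nor_space X u"
    using proj_tan_ex[OF u] by blast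
  have "lor (Xj u j) (D a) = lor (Xj u j) (DX u b)"
    using b(2) u nor_iff by (simp add: lor_simps lor_sym)
  also have "DX u b = - DX u (shape_matrix X \<nu> u *v a)"
    using shape_main[OF u lin, of a] shape_op_DX[OF u, of \<nu> a] b(1) D_def by (metis minus_minus)
  also have "lor (Xj u j) (- DX u (shape_matrix X \<nu> u *v a)) = - ((gram u ** shape_matrix X \<nu> u) *v a) $ j"
    using gram_mult[OF u] by (simp add: lor_simps matrix_vector_mul_assoc[symmetric])
  finally show ?thesis using D_def by simp
qed

end

lemmas lor_deriv = bounded_bilinear.FDERIV[OF bounded_bilinear_lor]

context msetup begin

definition DDX :: "real^'s \<Rightarrow> 's \<Rightarrow> 's \<Rightarrow> 'n mink" where
  "DDX u i j = frechet_derivative (\<lambda>x. Xj x j) (at u) (axis i 1)"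

lemma Xj_deriv: "u \<in> U \<Longrightarrow> ((\<lambda>x. Xj x j) has_derivative frechet_derivative (\<lambda>x. Xj x j) (at u)) (at u)"
proof -
  assume u: "u \<in> U"
  have "Ck_on (Suc 0) U (\<lambda>x. DX x (axis j 1))" using CkX[of "Suc (Suc 0)"] by simp
  thus ?thesis using Ck_on_SucD[OF openU _ u] unfolding Xj_def by blast
qed

lemma nT_deriv: "u \<in> U \<Longrightarrow> (nT has_derivative frechet_derivative nT (at u)) (at u)"
  using fnT Ck_on_SucD[OF openU _ , of 0 nT] unfolding future_unit_timelike_normal_def smooth_on_def by blast

lemma nT_props: "u \<in> U \<Longrightarrow> nT u \<in> nor_space X u \<and> lor (nT u) (nT u) = -1 \<and> fst (nT u) > 0"
  using fnT unfolding future_unit_timelike_normal_def by blast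

lemma inv_X: "u \<in> U \<Longrightarrow> inv_into U X (X u) = u"
  using emb homeomorphism_apply1 unfolding spacelike_embedding_def by blast

lemma h_deriv: "u \<in> U \<Longrightarrow> ((\<lambda>x. lor (X x) v) has_derivative (\<lambda>a. lor (DX u a) v)) (at u)"
  using lor_deriv[OF X_deriv has_derivative_const] by simp

lemma pderiv_h: assumes u: "u \<in> U" shows "pderiv (\<lambda>x. lor (X x) v) u j = lor (Xj u j) v"
proof -
  have "frechet_derivative (\<lambda>x. lor (X x) v) (at u) = (\<lambda>a. lor (DX u a) v)"
    using frechet_derivative_at[OF h_deriv[OF u]] by simp
  thus ?thesis unfolding pderiv_def Xj_def by simp
qed

lemma hessian_h:
  assumes u: "u \<in> U"
  shows "hessian (\<lambda>x. lor (X x) v) u $ i $ j = lor (DDX u i j) v"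
proof -
  have "((\<lambda>x. pderiv (\<lambda>x. lor (X x) v) x j) has_derivative
          (\<lambda>a. lor (frechet_derivative (\<lambda>x. Xj x j) (at u) a) v)) (at u)"
    apply (rule has_derivative_transform_within_open[OF _ openU u, where f="\<lambda>x. lor (Xj x j) v"])
    using lor_deriv[OF Xj_deriv[OF u] has_derivative_const[of v]] apply simp
    using pderiv_h by simp
  hence "frechet_derivative (\<lambda>x. pderiv (\<lambda>x. lor (X x) v) x j) (at u) =
          (\<lambda>a. lor (frechet_derivative (\<lambda>x. Xj x j) (at u) a) v)"
    using frechet_derivative_at by metis
  hence "pderiv (\<lambda>x. pderiv (\<lambda>x. lor (X x) v) x j) u i = lor (DDX u i j) v"
    unfolding pderiv_def[of "\<lambda>x. pderiv (\<lambda>x. lor (X x) v) x j"] DDX_def by simp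
  thus ?thesis unfolding hessian_def by simp
qed

lemma DDX_normal:
  assumes V: "open V" "V \<subseteq> U" "u \<in> V" and nu: "(\<nu> has_derivative D\<nu>) (at u)"
    and nn: "\<And>x. x \<in> V \<Longrightarrow> \<nu> x \<in> nor_space X x"
  shows "lor (DDX u i j) (\<nu> u) = - lor (Xj u j) (D\<nu> (axis i 1))"
proof -
  have u: "u \<in> U" using V by auto
  have d1: "((\<lambda>x. lor (Xj x j) (\<nu> x)) has_derivative
     (\<lambda>h. lor (Xj u j) (D\<nu> h) + lor (frechet_derivative (\<lambda>x. Xj x j) (at u) h) (\<nu> u))) (at u)"
    by (rule lor_deriv[OF Xj_deriv[OF u] nu])
  have z: "lor (Xj x j) (\<nu> x) = 0" if "x \<in> V" for x
  proof -
    have "lor (\<nu> x) (Xj x j) = 0" using nn[OF that] nor_iff[of x] that V by blast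
    thus ?thesis using lor_sym[of "Xj x j"] by simp
  qed
  have d2: "((\<lambda>x. lor (Xj x j) (\<nu> x)) has_derivative (\<lambda>h. 0)) (at u)"
    apply (rule has_derivative_transform_within_open[OF has_derivative_const V(1) V(3)])
    using z by simp
  have "(\<lambda>h. lor (Xj u j) (D\<nu> h) + lor (frechet_derivative (\<lambda>x. Xj x j) (at u) h) (\<nu> u)) = (\<lambda>h. 0)"
    using has_derivative_unique[OF d1 d2] .
  from fun_cong[OF this, of "axis i 1"] show ?thesis unfolding DDX_def by simp
qed

lemma part1:
  assumes u0: "u0 \<in> U" and v0: "v0 \<in> lightcone_sphere"
  shows "(\<forall>i. pderiv (\<lambda>u. lor (X u) v0) u0 i = 0) \<longleftrightarrow> (\<exists>\<xi>0\<in>N1 X nT u0. v0 = LGt U X nT (X u0, \<xi>0))"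
proof -
  have "(\<forall>i. pderiv (\<lambda>u. lor (X u) v0) u0 i = 0) \<longleftrightarrow> v0 \<in> nor_space X u0"
    using pderiv_h[OF u0] nor_iff[OF u0] lor_sym[of "Xj u0 _" v0] by simp
  also have "\<dots> \<longleftrightarrow> (\<exists>\<xi>0\<in>N1 X nT u0. v0 = LGt U X nT (X u0, \<xi>0))"
  proof
    assume vn: "v0 \<in> nor_space X u0"
    have vl: "lor v0 v0 = 0" "fst v0 = 1" using v0 unfolding lightcone_sphere_def by auto
    have nt: "nT u0 \<in> nor_space X u0" "lor (nT u0) (nT u0) = -1" using nT_props[OF u0] by auto
    define l where "l = - lor v0 (nT u0)"
    have l0: "l \<noteq> 0"
    proof
      assume "l = 0"
      hence "lor v0 (nT u0) = 0" unfolding l_def by simp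
      hence "v0 = 0" using timelike_perp(2)[OF nt(2)] vl(1) by blast
      thus False using vl(2) by simp
    qed
    define \<xi> where "\<xi> = (1/l) *\<^sub>R v0 - nT u0"
    have "\<xi> \<in> nor_space X u0" unfolding \<xi>_def by (intro nor_diff nor_scale vn nt)
    moreover have "lor \<xi> \<xi> = 1"
      unfolding \<xi>_def using vl nt l0 by (simp add: lor_simps lor_sym[of "nT u0" v0] l_def field_simps)
    moreover have "lor \<xi> (nT u0) = 0"
      unfolding \<xi>_def using vl nt l0 by (simp add: lor_simps l_def field_simps)
    moreover have "v0 = LGt U X nT (X u0, \<xi>)"
      unfolding LGt_def ltilde_def \<xi>_def using inv_X[OF u0] l0 vl by simp
    ultimately show "\<exists>\<xi>0\<in>N1 X nT u0. v0 = LGt U X nT (X u0, \<xi>0)" unfolding N1_def by blast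
  next
    assume "\<exists>\<xi>0\<in>N1 X nT u0. v0 = LGt U X nT (X u0, \<xi>0)"
    then obtain \<xi> where xi: "\<xi> \<in> N1 X nT u0" "v0 = LGt U X nT (X u0, \<xi>)" by blast
    have "v0 = (1 / fst (nT u0 + \<xi>)) *\<^sub>R (nT u0 + \<xi>)"
      using xi(2) inv_X[OF u0] unfolding LGt_def ltilde_def by simp
    moreover have "nT u0 + \<xi> \<in> nor_space X u0"
      using xi(1) nT_props[OF u0] unfolding N1_def by (auto intro: nor_add)
    ultimately show "v0 \<in> nor_space X u0" using nor_scale by metis
  qed
  finally show ?thesis .
qed

lemma parts23:
  assumes u0: "u0 \<in> U" and xi: "\<xi>0 \<in> N1 X nT u0" and v0: "v0 = LGt U X nT (X u0, \<xi>0)"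
   and fv0: "fst v0 = 1"
   and sec: "local_section U X nT V nS" and u0V: "u0 \<in> V" and nS0: "nS u0 = \<xi>0"
  shows "(K_ell X nT nS u0 = 0 \<longleftrightarrow> det (hessian (\<lambda>u. lor (X u) v0) u0) = 0) \<and>
         (flat_umbilical X nT nS u0 \<longleftrightarrow> rank (hessian (\<lambda>u. lor (X u) v0) u0) = 0)"
proof -
  define \<nu> where "\<nu> = (\<lambda>x. nT x + nS x)"
  have V: "open V" "V \<subseteq> U" and nSsm: "smooth_on V nS" and nSN: "\<forall>u\<in>V. nS u \<in> N1 X nT u"
    using sec unfolding local_section_def by auto
  have nS_d: "(nS has_derivative frechet_derivative nS (at u0)) (at u0)"
    using Ck_on_SucD[OF V(1) _ u0V, of 0 nS] nSsm unfolding smooth_on_def by blast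
  define D\<nu> where "D\<nu> = (\<lambda>h. frechet_derivative nT (at u0) h + frechet_derivative nS (at u0) h)"
  have nu_d: "(\<nu> has_derivative D\<nu>) (at u0)"
    unfolding \<nu>_def D\<nu>_def by (rule has_derivative_add[OF nT_deriv[OF u0] nS_d])
  have fdnu: "frechet_derivative \<nu> (at u0) = D\<nu>" using frechet_derivative_at[OF nu_d] by simp
  have lin: "linear (frechet_derivative \<nu> (at u0))" using fdnu nu_d has_derivative_linear by metis
  have nn: "\<nu> x \<in> nor_space X x" if "x \<in> V" for x
    using nT_props[of x] nSN that V unfolding \<nu>_def N1_def by (auto intro: nor_add)
  define c where "c = fst (\<nu> u0)"
  have v0eq: "v0 = (1/c) *\<^sub>R \<nu> u0" using v0 inv_X[OF u0] nS0 unfolding LGt_def ltilde_def \<nu>_def c_def by simp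
  have c0: "c \<noteq> 0" using fv0 v0eq by auto
  define A where "A = shape_matrix X \<nu> u0"
  define M where "M = gram u0 ** A"
  have Hij: "hessian (\<lambda>u. lor (X u) v0) u0 $ i $ j = (1/c) * M $ j $ i" for i j
  proof -
    have "hessian (\<lambda>u. lor (X u) v0) u0 $ i $ j = (1/c) * lor (DDX u0 i j) (\<nu> u0)"
    proof -
      have "lor (DDX u0 i j) v0 = (1/c) * lor (DDX u0 i j) (\<nu> u0)" using v0eq by (simp add: lor_simps)
      thus ?thesis using hessian_h[OF u0, of v0 i j] by simp
    qed
    also have "\<dots> = (1/c) * (- lor (Xj u0 j) (D\<nu> (axis i 1)))"
      using DDX_normal[OF V u0V nu_d nn] by simp
    also have "\<dots> = (1/c) * ((M *v axis i 1) $ j)"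
      using lor_Dnu[OF u0 lin, of j "axis i 1"] fdnu unfolding M_def A_def by simp
    also have "\<dots> = (1/c) * M $ j $ i"
      by (simp add: matrix_vector_mult_basis column_def)
    finally show ?thesis .
  qed
  have Hx: "hessian (\<lambda>u. lor (X u) v0) u0 *v x = (1/c) *\<^sub>R (transpose M *v x)" for x
  proof -
    have "(hessian (\<lambda>u. lor (X u) v0) u0 *v x)$i = (1/c) * (transpose M *v x)$i" for i
      unfolding matrix_vector_mult_def by (simp add: Hij transpose_def sum_distrib_left mult.assoc)
    thus ?thesis by (simp add: vec_eq_iff)
  qed
  have gi: "gram u0 *v y = 0 \<longleftrightarrow> y = 0" for y
    using det_zero_iff[of "gram u0"] gram_det[OF u0] by auto
  have K: "K_ell X nT nS u0 = det A" unfolding K_ell_def A_def \<nu>_def by simp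
  have part2: "K_ell X nT nS u0 = 0 \<longleftrightarrow> det (hessian (\<lambda>u. lor (X u) v0) u0) = 0"
  proof -
    have "det (hessian (\<lambda>u. lor (X u) v0) u0) = 0 \<longleftrightarrow> (\<exists>x. x \<noteq> 0 \<and> transpose M *v x = 0)"
      using det_zero_iff[of "hessian (\<lambda>u. lor (X u) v0) u0"] Hx c0 by simp
    also have "\<dots> \<longleftrightarrow> det M = 0" using det_zero_iff[of "transpose M"] by simp
    also have "\<dots> \<longleftrightarrow> det A = 0" unfolding M_def det_mul using gram_det[OF u0] by simp
    finally show ?thesis using K by simp
  qed
  have A0: "(A = 0) \<longleftrightarrow> (\<forall>a. A *v a = 0)" by (simp add: matrix_eq)
  have part3a: "flat_umbilical X nT nS u0 \<longleftrightarrow> A = 0"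
  proof -
    have "flat_umbilical X nT nS u0 \<longleftrightarrow> (\<forall>a. DX u0 (A *v a) = 0)"
      unfolding flat_umbilical_def tan_space_def A_def
      using shape_main[OF u0 lin] unfolding \<nu>_def by auto
    thus ?thesis using A0 DX_zero[OF u0] by simp
  qed
  have part3b: "rank (hessian (\<lambda>u. lor (X u) v0) u0) = 0 \<longleftrightarrow> A = 0"
  proof -
    have "rank (hessian (\<lambda>u. lor (X u) v0) u0) = 0 \<longleftrightarrow> (\<forall>x. transpose M *v x = 0)"
      unfolding rank_eq_0 matrix_eq using Hx c0 by simp
    also have "\<dots> \<longleftrightarrow> transpose M = 0" by (simp add: matrix_eq)
    also have "\<dots> \<longleftrightarrow> M = 0"
    proof -
      have t0: "transpose (0::real^'s^'s) = 0" by (simp add: transpose_def vec_eq_iff)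
      show ?thesis by (metis transpose_transpose t0)
    qed
    also have "\<dots> \<longleftrightarrow> (\<forall>a. gram u0 *v (A *v a) = 0)"
      unfolding M_def matrix_eq by (simp add: matrix_vector_mul_assoc)
    also have "\<dots> \<longleftrightarrow> A = 0" using gi A0 by simp
    finally show ?thesis .
  qed
  show ?thesis using part2 part3a part3b by simp
qed

end

lemma has_derivative_inverse_within:
  fixes f :: "'a::real_normed_vector \<Rightarrow> 'b::real_normed_vector"
  assumes derf: "(f has_derivative f') (at (g y))"
    and ling': "bounded_linear g'"
    and gf: "g' \<circ> f' = id"
    and contg: "continuous (at y within T) g"
    and yT: "y \<in> T"
    and fg: "\<And>z. z \<in> T \<Longrightarrow> f (g z) = z"
  shows "(g has_derivative g') (at y within T)"
proof -
  interpret f': bounded_linear f'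
    using assms unfolding has_derivative_def by auto
  interpret g': bounded_linear g'
    using assms by auto
  obtain C where C: "0 < C" "\<And>x. norm (g' x) \<le> norm x * C"
    using bounded_linear.pos_bounded[OF assms(2)] by blast
  have lem1: "\<forall>e>0. \<exists>d>0. \<forall>z\<in>T.
    norm (z - y) < d \<longrightarrow> norm (g z - g y - g'(z - y)) \<le> e * norm (g z - g y)"
  proof (intro allI impI)
    fix e :: real
    assume "e > 0"
    with C(1) have *: "e / C > 0" by auto
    obtain d0 where  "0 < d0" and d0:
        "\<And>u. norm (u - g y) < d0 \<Longrightarrow> norm (f u - f (g y) - f' (u - g y)) \<le> e / C * norm (u - g y)"
      using derf * unfolding has_derivative_at_alt by blast
    obtain d1 where "0 < d1" and d1: "\<And>x. x \<in> T \<Longrightarrow> dist x y < d1 \<Longrightarrow> dist (g x) (g y) < d0"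
      using contg \<open>0 < d0\<close> unfolding continuous_within_eps_delta by blast
    show "\<exists>d>0. \<forall>z\<in>T. norm (z - y) < d \<longrightarrow> norm (g z - g y - g' (z - y)) \<le> e * norm (g z - g y)"
    proof (intro exI ballI impI conjI)
      fix z
      assume zT: "z \<in> T" and as: "norm (z - y) < d1"
      have "norm (g z - g y - g' (z - y)) \<le> norm (g' (f (g z) - y - f' (g z - g y)))"
        unfolding g'.diff f'.diff
        unfolding assms(3)[unfolded o_def id_def, THEN fun_cong] fg[OF zT]
        by (simp add: norm_minus_commute)
      also have "\<dots> \<le> norm (f (g z) - y - f' (g z - g y)) * C"
        by (rule C(2))
      also have "\<dots> \<le> (e / C) * norm (g z - g y) * C"
      proof -
        have "norm (g z - g y) < d0"
          using d1[OF zT] as by (simp add: dist_norm)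
        hence "norm (f (g z) - f (g y) - f' (g z - g y)) \<le> e / C * norm (g z - g y)" by (rule d0)
        hence "norm (f (g z) - y - f' (g z - g y)) \<le> e / C * norm (g z - g y)" using fg[OF yT] by simp
        then show ?thesis using C(1) mult_right_mono[of _ _ C] by (simp only:)
      qed
      also have "\<dots> \<le> e * norm (g z - g y)"
        using C by (auto simp add: field_simps)
      finally show "norm (g z - g y - g' (z - y)) \<le> e * norm (g z - g y)"
        by simp
    qed (use \<open>0 < d1\<close> in auto)
  qed
  have *: "(0::real) < 1 / 2"
    by auto
  obtain d where "0 < d" and d:
      "\<And>z. z \<in> T \<Longrightarrow> norm (z - y) < d \<Longrightarrow> norm (g z - g y - g' (z - y)) \<le> 1/2 * norm (g z - g y)"
    using lem1 * by blast
  define B where "B = C * 2"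
  have "B > 0"
    unfolding B_def using C by auto
  have lem2: "norm (g z - g y) \<le> B * norm (z - y)" if zT: "z \<in> T" and z: "norm(z - y) < d" for z
  proof -
    have "norm (g z - g y) \<le> norm(g' (z - y)) + norm ((g z - g y) - g'(z - y))"
      by (rule norm_triangle_sub)
    also have "\<dots> \<le> norm (g' (z - y)) + 1 / 2 * norm (g z - g y)"
      by (rule add_left_mono) (use d zT z in auto)
    also have "\<dots> \<le> norm (z - y) * C + 1 / 2 * norm (g z - g y)"
      by (rule add_right_mono) (use C in auto)
    finally show "norm (g z - g y) \<le> B * norm (z - y)"
      unfolding B_def
      by (auto simp add: field_simps)
  qed
  show ?thesis
    unfolding has_derivative_within_alt
  proof (intro conjI assms allI impI)
    fix e :: real
    assume "e > 0"
    then have *: "e / B > 0" by (metis \<open>B > 0\<close> divide_pos_pos)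
    obtain d' where "0 < d'" and d':
        "\<And>z. z \<in> T \<Longrightarrow> norm (z - y) < d' \<Longrightarrow> norm (g z - g y - g' (z - y)) \<le> e / B * norm (g z - g y)"
      using lem1 * by blast
    obtain k where k: "0 < k" "k < d" "k < d'"
      using field_lbound_gt_zero[OF \<open>0 < d\<close> \<open>0 < d'\<close>] by blast
    show "\<exists>d>0. \<forall>ya\<in>T. norm (ya - y) < d \<longrightarrow> norm (g ya - g y - g' (ya - y)) \<le> e * norm (ya - y)"
    proof (intro exI ballI impI conjI)
      fix z
      assume zT: "z \<in> T" and as: "norm (z - y) < k"
      then have "norm (g z - g y - g' (z - y)) \<le> e / B * norm(g z - g y)"
        using d' k by auto
      also have "\<dots> \<le> e * norm (z - y)"
        unfolding times_divide_eq_left pos_divide_le_eq[OF \<open>B>0\<close>]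
        using lem2[OF zT, of] k as \<open>e > 0\<close>
        by (auto simp add: field_simps)
      finally show "norm (g z - g y - g' (z - y)) \<le> e * norm (z - y)"
        by simp
    qed (use k in auto)
  qed
qed

lemma deriv_const_on_open:
  assumes "open S" "x \<in> S" "\<And>y. y \<in> S \<Longrightarrow> f y = k" "(f has_derivative f') (at x)"
  shows "f' = (\<lambda>h. 0)"
proof -
  have "(f has_derivative (\<lambda>h. 0)) (at x)"
    by (rule has_derivative_transform_within_open[OF has_derivative_const assms(1,2)]) (use assms(3) in auto)
  thus ?thesis using has_derivative_unique assms(4) by blast
qed

lemma sphere_deriv_TS:
  fixes \<phi> :: "real \<Rightarrow> ('n::finite) mink"
  assumes e: "e > 0" and sp: "\<And>t. t \<in> {-e<..<e} \<Longrightarrow> \<phi> t \<in> lightcone_sphere"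
    and d: "(\<phi> has_derivative (\<lambda>h. h *\<^sub>R w)) (at 0)"
  shows "fst w = 0 \<and> lor (\<phi> 0) w = 0"
proof -
  have S: "open {-e<..<e::real}" "(0::real) \<in> {-e<..<e}" using e by auto
  have "(\<lambda>h. fst (h *\<^sub>R w)) = (\<lambda>h. 0)"
    apply (rule deriv_const_on_open[OF S, where f="\<lambda>t. fst (\<phi> t)" and k=1])
    using sp apply (simp add: lightcone_sphere_def)
    using has_derivative_fst[OF d] .
  from fun_cong[OF this, of 1] have f: "fst w = 0" by simp
  have "(\<lambda>h. lor (\<phi> 0) (h *\<^sub>R w) + lor (h *\<^sub>R w) (\<phi> 0)) = (\<lambda>h. 0)"
    apply (rule deriv_const_on_open[OF S, where f="\<lambda>t. lor (\<phi> t) (\<phi> t)" and k=0])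
    using sp apply (simp add: lightcone_sphere_def)
    using lor_deriv[OF d d] .
  from fun_cong[OF this, of 1] have "lor (\<phi> 0) w = 0" by (simp add: lor_sym[of w])
  thus ?thesis using f by simp
qed

lemma Ck_on_det:
  fixes M :: "'a::real_normed_vector \<Rightarrow> real^'n^'n"
  assumes "open S" "\<And>i j. Ck_on k S (\<lambda>x. M x $ i $ j)"
  shows "Ck_on k S (\<lambda>x. det (M x))"
  unfolding det_def
  apply (rule Ck_on_sum[OF assms(1)])
   apply (simp add: finite_permutations)
  apply (rule Ck_on_mult[OF assms(1) Ck_on_const])
  apply (rule Ck_on_prod[OF assms(1)])
  using assms(2) by auto

lemma smooth_curve_deriv:
  fixes \<gamma> :: "real \<Rightarrow> 'b::real_normed_vector"
  assumes "e > 0" "smooth_on {-e<..<e} \<gamma>"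
  shows "(\<gamma> has_vector_derivative vector_derivative \<gamma> (at 0)) (at 0)"
proof -
  have "Ck_on (Suc 0) {-e<..<e} \<gamma>" using assms(2) unfolding smooth_on_def by blast
  hence "(\<gamma> has_derivative frechet_derivative \<gamma> (at 0)) (at 0)"
    using Ck_on_SucD[of "{-e<..<e}" 0 \<gamma> 0] assms(1) by simp
  hence "\<gamma> differentiable (at 0)" unfolding differentiable_def by blast
  thus ?thesis using vector_derivative_works by blast
qed


context msetup begin

lemma cont_inv: "continuous_on (X ` U) (inv_into U X)"
  using emb unfolding spacelike_embedding_def homeomorphism_def by blast

lemma DDX_normal_gen:
  assumes V: "open V" "V \<subseteq> U" "u \<in> V" and nu: "(\<nu> has_derivative D\<nu>) (at u)"
    and nn: "\<And>x. x \<in> V \<Longrightarrow> \<nu> x \<in> nor_space X x"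
  shows "lor (frechet_derivative (\<lambda>x. Xj x j) (at u) h) (\<nu> u) = - lor (Xj u j) (D\<nu> h)"
proof -
  have u: "u \<in> U" using V by auto
  have d1: "((\<lambda>x. lor (Xj x j) (\<nu> x)) has_derivative
     (\<lambda>h. lor (Xj u j) (D\<nu> h) + lor (frechet_derivative (\<lambda>x. Xj x j) (at u) h) (\<nu> u))) (at u)"
    by (rule lor_deriv[OF Xj_deriv[OF u] nu])
  have z: "lor (Xj x j) (\<nu> x) = 0" if "x \<in> V" for x
  proof -
    have "lor (\<nu> x) (Xj x j) = 0" using nn[OF that] nor_iff[of x] that V by blast
    thus ?thesis using lor_sym[of "Xj x j"] by simp
  qed
  have "(\<lambda>h. lor (Xj u j) (D\<nu> h) + lor (frechet_derivative (\<lambda>x. Xj x j) (at u) h) (\<nu> u)) = (\<lambda>h. 0)"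
    by (rule deriv_const_on_open[OF V(1,3) z d1])
  from fun_cong[OF this, of h] show ?thesis by simp
qed

lemma point_sphere:
  assumes u: "u \<in> U" and xi: "\<xi> \<in> N1 X nT u"
  shows "lor (nT u + \<xi>) (nT u + \<xi>) = 0" "lor (nT u + \<xi>) (nT u) = -1"
    "fst (nT u + \<xi>) \<noteq> 0" "ltilde (nT u + \<xi>) \<in> lightcone_sphere" "nT u + \<xi> \<in> nor_space X u"
proof -
  have n: "nT u \<in> nor_space X u" "lor (nT u) (nT u) = -1" using nT_props[OF u] by auto
  have x: "\<xi> \<in> nor_space X u" "lor \<xi> \<xi> = 1" "lor \<xi> (nT u) = 0" using xi unfolding N1_def by auto
  show l0: "lor (nT u + \<xi>) (nT u + \<xi>) = 0" using n x by (simp add: lor_simps lor_sym[of "nT u" \<xi>])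
  show l1: "lor (nT u + \<xi>) (nT u) = -1" using n x by (simp add: lor_simps)
  show f0: "fst (nT u + \<xi>) \<noteq> 0"
  proof
    assume f: "fst (nT u + \<xi>) = 0"
    hence "snd (nT u + \<xi>) \<bullet> snd (nT u + \<xi>) = 0" using l0 by (simp add: lor_def)
    hence "snd (nT u + \<xi>) = 0" by simp
    hence "nT u + \<xi> = 0" using f by (simp add: prod_eq_iff)
    thus False using l1 by simp
  qed
  have "lor (ltilde (nT u + \<xi>)) (ltilde (nT u + \<xi>)) = 0"
    unfolding ltilde_def by (simp only: lor_scaleR_left lor_scaleR_right l0 mult_zero_right)
  moreover have "fst (ltilde (nT u + \<xi>)) = 1" unfolding ltilde_def using f0 by simp
  ultimately show "ltilde (nT u + \<xi>) \<in> lightcone_sphere" unfolding lightcone_sphere_def by simp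
  show "nT u + \<xi> \<in> nor_space X u" using n x by (simp add: nor_add)
qed

lemma curve_inverse:
  assumes e: "e > 0" and sm: "smooth_on {-e<..<e} \<gamma>" and img: "\<gamma> ` {-e<..<e} \<subseteq> N1_bundle U X nT"
    and g0: "fst (\<gamma> 0) = X u0" and u0: "u0 \<in> U"
  shows "\<And>t. t \<in> {-e<..<e} \<Longrightarrow> inv_into U X (fst (\<gamma> t)) \<in> U \<and> X (inv_into U X (fst (\<gamma> t))) = fst (\<gamma> t)
            \<and> snd (\<gamma> t) \<in> N1 X nT (inv_into U X (fst (\<gamma> t)))"
    and "\<exists>a. ((\<lambda>t. inv_into U X (fst (\<gamma> t))) has_derivative (\<lambda>h. h *\<^sub>R a)) (at 0)"
proof -
  fix t assume t: "t \<in> {-e<..<e}"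
  then obtain u \<xi> where "\<gamma> t = (X u, \<xi>)" "u \<in> U" "\<xi> \<in> N1 X nT u"
    using img unfolding N1_bundle_def by blast
  thus "inv_into U X (fst (\<gamma> t)) \<in> U \<and> X (inv_into U X (fst (\<gamma> t))) = fst (\<gamma> t)
            \<and> snd (\<gamma> t) \<in> N1 X nT (inv_into U X (fst (\<gamma> t)))"
    using inv_X by simp
next
  define S where "S = {-e<..<e::real}"
  have S: "open S" "0 \<in> S" using e unfolding S_def by auto
  have inT: "fst (\<gamma> t) \<in> X ` U" if "t \<in> S" for t
  proof -
    have "\<gamma> t \<in> N1_bundle U X nT" using img that unfolding S_def by blast
    then obtain u \<xi> where "\<gamma> t = (X u, \<xi>)" "u \<in> U" unfolding N1_bundle_def by blast
    thus ?thesis by simp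
  qed
  define g' where "g' = vector_derivative \<gamma> (at 0)"
  have gd: "(\<gamma> has_vector_derivative g') (at 0)" unfolding g'_def by (rule smooth_curve_deriv[OF e sm])
  have fd0: "((\<lambda>t. fst (\<gamma> t)) has_derivative (\<lambda>h. fst (h *\<^sub>R g'))) (at 0)"
    by (rule has_derivative_fst[OF gd[unfolded has_vector_derivative_def]])
  have fd: "((\<lambda>t. fst (\<gamma> t)) has_derivative (\<lambda>h. fst (h *\<^sub>R g'))) (at 0 within S)"
    by (rule has_derivative_at_withinI[OF fd0])
  obtain K where K: "linear K" "K \<circ> DX u0 = id"
    using linear_injective_left_inverse[OF linear_DX[OF u0] DX_inj[OF u0]] by blast
  have bK: "bounded_linear K" using K(1) linear_conv_bounded_linear by blast
  have invd: "(inv_into U X has_derivative K) (at (X u0) within X ` U)"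
    apply (rule has_derivative_inverse_within[where f=X and f'="DX u0"])
    using X_deriv[OF u0] inv_X[OF u0] apply simp
        apply (rule bK)
       apply (rule K(2))
    using cont_inv u0 continuous_on_eq_continuous_within apply blast
    using u0 apply blast
    by (simp add: f_inv_into_f)
  have sub: "(\<lambda>t. fst (\<gamma> t)) ` S \<subseteq> X ` U" using inT by blast
  have invd2: "(inv_into U X has_derivative K) (at (fst (\<gamma> 0)) within (\<lambda>t. fst (\<gamma> t)) ` S)"
    unfolding g0 by (rule has_derivative_subset[OF invd sub])
  have "((\<lambda>t. inv_into U X (fst (\<gamma> t))) has_derivative (\<lambda>h. K (fst (h *\<^sub>R g')))) (at 0 within S)"
    by (rule has_derivative_in_compose[OF fd invd2])
  hence "((\<lambda>t. inv_into U X (fst (\<gamma> t))) has_derivative (\<lambda>h. K (fst (h *\<^sub>R g')))) (at 0)"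
    unfolding at_within_open[OF S(2,1)] .
  moreover have "(\<lambda>h. K (fst (h *\<^sub>R g'))) = (\<lambda>h. h *\<^sub>R K (fst g'))"
    using linear_scale[OF K(1)] by simp
  ultimately have "((\<lambda>t. inv_into U X (fst (\<gamma> t))) has_derivative (\<lambda>h. h *\<^sub>R K (fst g'))) (at 0)" by simp
  thus "\<exists>a. ((\<lambda>t. inv_into U X (fst (\<gamma> t))) has_derivative (\<lambda>h. h *\<^sub>R a)) (at 0)" by blast
qed

end

locale msec = msetup +
  fixes u0 \<xi>0 V nS
  assumes u0: "u0 \<in> U" and xi0: "\<xi>0 \<in> N1 X nT u0" and sec: "local_section U X nT V nS"
    and u0V: "u0 \<in> V" and nS0: "nS u0 = \<xi>0"
begin

definition "nuS x = nT x + nS x"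
definition "DnT = frechet_derivative nT (at u0)"
definition "DnS = frechet_derivative nS (at u0)"
definition "Ash = shape_matrix X nuS u0"
definition "nu0 = nT u0 + \<xi>0"
definition "cc = fst nu0"
definition "DXj j = frechet_derivative (\<lambda>x. Xj x j) (at u0)"

lemma V_props: "open V" "V \<subseteq> U" "smooth_on V nS" "\<And>u. u \<in> V \<Longrightarrow> nS u \<in> N1 X nT u"
  using sec unfolding local_section_def by auto

lemma nS_d: "(nS has_derivative DnS) (at u0)"
  unfolding DnS_def using Ck_on_SucD[OF V_props(1) _ u0V, of 0 nS] V_props(3) unfolding smooth_on_def by blast

lemma nT_d: "(nT has_derivative DnT) (at u0)"
  unfolding DnT_def using nT_deriv[OF u0] .

lemma lin_DnT: "linear DnT" using nT_d has_derivative_linear by blast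
lemma lin_DnS: "linear DnS" using nS_d has_derivative_linear by blast

lemma nuS_d: "(nuS has_derivative (\<lambda>h. DnT h + DnS h)) (at u0)"
  unfolding nuS_def[abs_def] by (rule has_derivative_add[OF nT_d nS_d])

lemma fd_nuS: "frechet_derivative nuS (at u0) = (\<lambda>h. DnT h + DnS h)"
  using frechet_derivative_at[OF nuS_d] by simp

lemma lin_nuS: "linear (frechet_derivative nuS (at u0))"
  using fd_nuS nuS_d has_derivative_linear by metis

lemma nu0_props: "lor nu0 nu0 = 0" "lor nu0 (nT u0) = -1" "cc \<noteq> 0" "nu0 \<in> nor_space X u0"
  using point_sphere[OF u0 xi0] unfolding nu0_def cc_def by auto

lemma v0_eq: "LGt U X nT (X u0, \<xi>0) = (1/cc) *\<^sub>R nu0"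
  unfolding LGt_def ltilde_def cc_def nu0_def using inv_X[OF u0] by simp

lemma proj_DnuS: "DnT a + DnS a - DX u0 (- (Ash *v a)) \<in> nor_space X u0"
proof -
  obtain b where b: "proj_tan X u0 (frechet_derivative nuS (at u0) a) = DX u0 b"
     "frechet_derivative nuS (at u0) a - DX u0 b \<in> nor_space X u0"
    using proj_tan_ex[OF u0] by blast
  have "- DX u0 b = DX u0 (Ash *v a)"
    using shape_main[OF u0 lin_nuS, of a] shape_op_DX[OF u0, of nuS a] b(1) unfolding Ash_def by simp
  hence "DX u0 b = DX u0 (- (Ash *v a))" using linear_neg[OF linear_DX[OF u0]] by (metis minus_minus)
  thus ?thesis using b(2) fd_nuS by simp
qed

lemma lor_nu0_DnuS: "lor nu0 (DnT a + DnS a) = 0"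
proof -
  have z: "lor (nuS x) (nuS x) = 0" if "x \<in> V" for x
    using point_sphere[of x "nS x"] V_props that unfolding nuS_def by auto
  have "(\<lambda>h. lor (nuS u0) (DnT h + DnS h) + lor (DnT h + DnS h) (nuS u0)) = (\<lambda>h. 0)"
    by (rule deriv_const_on_open[OF V_props(1) u0V z lor_deriv[OF nuS_d nuS_d]])
  from fun_cong[OF this, of a] show ?thesis
    unfolding nuS_def nu0_def nS0 using lor_sym[of "DnT a + DnS a"] by simp
qed

lemma normal_id: "lor (Xj u0 j) (DnT h + DnS h) = - lor (DXj j h) (nT u0) - lor (DXj j h) \<xi>0"
proof -
  have a: "lor (DXj j h) (nT u0) = - lor (Xj u0 j) (DnT h)"
    unfolding DXj_def
    by (rule DDX_normal_gen[OF openU order_refl u0 nT_d]) (use nT_props in blast)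
  have b: "lor (DXj j h) (nS u0) = - lor (Xj u0 j) (DnS h)"
    unfolding DXj_def
    by (rule DDX_normal_gen[OF V_props(1,2) u0V nS_d]) (use V_props(4) in \<open>auto simp: N1_def\<close>)
  show ?thesis using a b nS0 by (simp add: lor_simps)
qed

end

context msec begin

lemma curve_deriv:
  assumes e: "e > 0" and sm: "smooth_on {-e<..<e} \<gamma>" and img: "\<gamma> ` {-e<..<e} \<subseteq> N1_bundle U X nT"
    and g0: "\<gamma> 0 = (X u0, \<xi>0)"
  shows "\<exists>w a. ((\<lambda>t. LGt U X nT (\<gamma> t)) has_vector_derivative w) (at 0) \<and>
     (\<forall>t\<in>{-e<..<e}. LGt U X nT (\<gamma> t) \<in> lightcone_sphere) \<and>
     w - DX u0 ((- (1/cc)) *\<^sub>R (Ash *v a)) \<in> nor_space X u0"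
proof -
  define S where "S = {-e<..<e::real}"
  have S: "open S" "0 \<in> S" using e unfolding S_def by auto
  define u where "u = (\<lambda>t. inv_into U X (fst (\<gamma> t)))"
  have g0f: "fst (\<gamma> 0) = X u0" using g0 by simp
  have mem: "\<And>t. t \<in> S \<Longrightarrow> u t \<in> U \<and> X (u t) = fst (\<gamma> t) \<and> snd (\<gamma> t) \<in> N1 X nT (u t)"
    using curve_inverse(1)[OF e sm img g0f u0] unfolding u_def S_def by blast
  obtain a where ud: "(u has_derivative (\<lambda>h. h *\<^sub>R a)) (at 0)"
    using curve_inverse(2)[OF e sm img g0f u0] unfolding u_def by blast
  have uu0: "u 0 = u0" unfolding u_def using g0 inv_X[OF u0] by simp
  define g' where "g' = vector_derivative \<gamma> (at 0)"
  have gd: "(\<gamma> has_vector_derivative g') (at 0)" unfolding g'_def by (rule smooth_curve_deriv[OF e sm])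
  define \<xi> where "\<xi> = (\<lambda>t. snd (\<gamma> t))"
  have xid0: "(\<xi> has_derivative (\<lambda>h. snd (h *\<^sub>R g'))) (at 0)"
    unfolding \<xi>_def by (rule has_derivative_snd[OF gd[unfolded has_vector_derivative_def]])
  have xid: "(\<xi> has_derivative (\<lambda>h. h *\<^sub>R snd g')) (at 0)" using xid0 by simp
  have nTd0: "(nT has_derivative DnT) (at (u 0))" using nT_d uu0 by simp
  have nTu: "((\<lambda>t. nT (u t)) has_derivative (\<lambda>h. DnT (h *\<^sub>R a))) (at 0)"
    by (rule has_derivative_compose[OF ud nTd0])
  define \<nu>' where "\<nu>' = DnT a + snd g'"
  define \<nu> where "\<nu> = (\<lambda>t. nT (u t) + \<xi> t)"
  have nud0: "(\<nu> has_derivative (\<lambda>h. DnT (h *\<^sub>R a) + h *\<^sub>R snd g')) (at 0)"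
    unfolding \<nu>_def by (rule has_derivative_add[OF nTu xid])
  have "(\<lambda>h. DnT (h *\<^sub>R a) + h *\<^sub>R snd g') = (\<lambda>h. h *\<^sub>R \<nu>')"
    unfolding \<nu>'_def using linear_scale[OF lin_DnT] by (simp add: scaleR_add_right)
  hence nud: "(\<nu> has_derivative (\<lambda>h. h *\<^sub>R \<nu>')) (at 0)" using nud0 by simp
  have nu00: "\<nu> 0 = nu0" unfolding \<nu>_def nu0_def \<xi>_def using uu0 g0 by simp
  have LG: "LGt U X nT (\<gamma> t) = (1 / fst (\<nu> t)) *\<^sub>R \<nu> t" for t
    unfolding LGt_def ltilde_def \<nu>_def u_def \<xi>_def by simp
  have fnd: "((\<lambda>t. fst (\<nu> t)) has_derivative (\<lambda>h. fst (h *\<^sub>R \<nu>'))) (at 0)"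
    by (rule has_derivative_fst[OF nud])
  have c0: "fst (\<nu> 0) \<noteq> 0" using nu00 nu0_props(3) unfolding cc_def by simp
  have invd: "((\<lambda>t. inverse (fst (\<nu> t))) has_derivative
      (\<lambda>h. - (inverse (fst (\<nu> 0)) * fst (h *\<^sub>R \<nu>') * inverse (fst (\<nu> 0))))) (at 0)"
    by (rule Deriv.has_derivative_inverse[OF c0 fnd])
  define w where "w = (1/cc) *\<^sub>R \<nu>' - (fst \<nu>' / cc^2) *\<^sub>R nu0"
  have "((\<lambda>t. inverse (fst (\<nu> t)) *\<^sub>R \<nu> t) has_derivative
     (\<lambda>h. inverse (fst (\<nu> 0)) *\<^sub>R (h *\<^sub>R \<nu>') + (- (inverse (fst (\<nu> 0)) * fst (h *\<^sub>R \<nu>') * inverse (fst (\<nu> 0)))) *\<^sub>R \<nu> 0)) (at 0)"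
    by (rule has_derivative_scaleR[OF invd nud])
  moreover have "(\<lambda>h. inverse (fst (\<nu> 0)) *\<^sub>R (h *\<^sub>R \<nu>') + (- (inverse (fst (\<nu> 0)) * fst (h *\<^sub>R \<nu>') * inverse (fst (\<nu> 0)))) *\<^sub>R \<nu> 0)
      = (\<lambda>h. h *\<^sub>R w)"
    unfolding w_def nu00 cc_def by (auto simp: algebra_simps power2_eq_square divide_inverse)
  ultimately have wd: "((\<lambda>t. LGt U X nT (\<gamma> t)) has_vector_derivative w) (at 0)"
    unfolding has_vector_derivative_def LG by (simp add: divide_inverse)
  have sph: "\<forall>t\<in>{-e<..<e}. LGt U X nT (\<gamma> t) \<in> lightcone_sphere"
  proof
    fix t assume t: "t \<in> {-e<..<e}"
    hence m: "u t \<in> U" "snd (\<gamma> t) \<in> N1 X nT (u t)" using mem S_def by auto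
    have "LGt U X nT (\<gamma> t) = ltilde (nT (u t) + snd (\<gamma> t))" unfolding LGt_def u_def by simp
    thus "LGt U X nT (\<gamma> t) \<in> lightcone_sphere" using point_sphere(4)[OF m] by simp
  qed
  have Xjd: "((\<lambda>t. Xj (u t) j) has_derivative (\<lambda>h. DXj j (h *\<^sub>R a))) (at 0)" for j
  proof -
    have "((\<lambda>x. Xj x j) has_derivative DXj j) (at (u 0))" unfolding DXj_def uu0 by (rule Xj_deriv[OF u0])
    thus ?thesis by (rule has_derivative_compose[OF ud])
  qed
  have perp: "lor (snd g') (Xj u0 j) = - lor \<xi>0 (DXj j a)" for j
  proof -
    have z: "lor (\<xi> t) (Xj (u t) j) = 0" if "t \<in> S" for t
      using mem[OF that] nor_iff[of "u t"] unfolding \<xi>_def N1_def by blast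
    have "(\<lambda>h. lor (\<xi> 0) (DXj j (h *\<^sub>R a)) + lor (h *\<^sub>R snd g') (Xj (u 0) j)) = (\<lambda>h. 0)"
      by (rule deriv_const_on_open[OF S z lor_deriv[OF xid Xjd]])
    from fun_cong[OF this, of 1] show ?thesis unfolding \<xi>_def using g0 uu0 by simp
  qed
  have n1: "\<nu>' - (DnT a + DnS a) \<in> nor_space X u0"
  proof -
    have "lor (\<nu>' - (DnT a + DnS a)) (Xj u0 j) = 0" for j
    proof -
      have "lor (\<nu>' - (DnT a + DnS a)) (Xj u0 j) = lor (snd g') (Xj u0 j) - lor (DnS a) (Xj u0 j)"
        unfolding \<nu>'_def by (simp add: lor_simps)
      also have "lor (DnS a) (Xj u0 j) = - lor (DXj j a) \<xi>0"
      proof -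
        have "lor (DXj j a) (nS u0) = - lor (Xj u0 j) (DnS a)"
          unfolding DXj_def
          by (rule DDX_normal_gen[OF V_props(1,2) u0V nS_d]) (use V_props(4) in \<open>auto simp: N1_def\<close>)
        thus ?thesis using nS0 lor_sym[of "DnS a"] by simp
      qed
      finally show ?thesis using perp[of j] lor_sym[of \<xi>0] by simp
    qed
    thus ?thesis using nor_iff[OF u0] by blast
  qed
  have n2: "\<nu>' - DX u0 (- (Ash *v a)) \<in> nor_space X u0"
    using nor_add[OF n1 proj_DnuS[of a]] by simp
  have "w - DX u0 ((- (1/cc)) *\<^sub>R (Ash *v a)) =
      (1/cc) *\<^sub>R (\<nu>' - DX u0 (- (Ash *v a))) - (fst \<nu>' / cc^2) *\<^sub>R nu0"
    unfolding w_def using linear_scale[OF linear_DX[OF u0]] linear_neg[OF linear_DX[OF u0]]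
    by (simp add: algebra_simps)
  hence "w - DX u0 ((- (1/cc)) *\<^sub>R (Ash *v a)) \<in> nor_space X u0"
    using nor_diff[OF nor_scale[OF n2] nor_scale[OF nu0_props(4)]] by simp
  thus ?thesis using wd sph by blast
qed

end

lemma Ck_on_id: "Ck_on k S (\<lambda>x::'a::real_normed_vector. x)"
proof (induction k)
  case 0 then show ?case by (simp add: continuous_on_id)
next
  case (Suc k)
  have "frechet_derivative (\<lambda>x. x) (at x) = (\<lambda>h. h)" for x
    using frechet_derivative_at[OF has_derivative_ident] by metis
  moreover have "\<forall>w. Ck_on k S (\<lambda>x::'a. w)" using Ck_on_const by blast
  ultimately show ?case by (simp add: differentiable_on_id)
qed

lemma powr_half_sq: "(x::real) > 0 \<Longrightarrow> x powr (-1/2) * x powr (-1/2) = 1 / x"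
  by (simp add: powr_add[symmetric] powr_minus_divide)

lemma norm_curve_deriv:
  fixes P E :: "real \<Rightarrow> 'b::real_normed_vector" and Q :: "real \<Rightarrow> real"
  assumes P: "(P has_derivative (\<lambda>h. h *\<^sub>R P')) (at 0)" and E: "(E has_derivative E') (at 0)"
    and Q: "(Q has_derivative Q') (at 0)"
  shows "((\<lambda>t. (1 + t*t*Q t) powr (-1/2) *\<^sub>R (P t + t *\<^sub>R E t)) has_derivative (\<lambda>h. h *\<^sub>R (P' + E 0))) (at 0)"
proof -
  have q: "((\<lambda>t. 1 + t*t*Q t) has_derivative (\<lambda>h. 0)) (at 0)"
    by (auto intro!: derivative_eq_intros Q)
  have p: "((\<lambda>t. (1 + t*t*Q t) powr (-1/2)) has_derivative (\<lambda>h. 0)) (at 0)"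
    using has_derivative_powr[OF q has_derivative_const[of "-1/2"]] by simp
  have r: "((\<lambda>t. P t + t *\<^sub>R E t) has_derivative (\<lambda>h. h *\<^sub>R P' + h *\<^sub>R E 0)) (at 0)"
    using has_derivative_add[OF P has_derivative_scaleR[OF has_derivative_ident E]] by simp
  show ?thesis
    using has_derivative_scaleR[OF p r] by (simp add: scaleR_add_right)
qed

lemma tangent_sphere:
  fixes v :: "('n::finite) mink"
  assumes v: "v \<in> lightcone_sphere"
  shows "tangent_set lightcone_sphere v = {w. fst w = 0 \<and> lor v w = 0}"
proof
  show "tangent_set lightcone_sphere v \<subseteq> {w. fst w = 0 \<and> lor v w = 0}"
  proof
    fix w assume "w \<in> tangent_set lightcone_sphere v"
    then obtain \<gamma> e where g: "w = vector_derivative \<gamma> (at 0)" "e > 0" "smooth_on {-e<..<e} \<gamma>"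
      "\<gamma> ` {-e<..<e} \<subseteq> lightcone_sphere" "\<gamma> 0 = v"
      unfolding tangent_set_def curve_through_def by blast
    have "(\<gamma> has_derivative (\<lambda>h. h *\<^sub>R w)) (at 0)"
      using smooth_curve_deriv[OF g(2,3)] g(1) unfolding has_vector_derivative_def by simp
    from sphere_deriv_TS[OF g(2) _ this] g(4,5) show "w \<in> {w. fst w = 0 \<and> lor v w = 0}" by blast
  qed
next
  show "{w. fst w = 0 \<and> lor v w = 0} \<subseteq> tangent_set lightcone_sphere v"
  proof
    fix w assume w: "w \<in> {w. fst w = 0 \<and> lor v w = 0}"
    obtain s where vs: "v = (1, s)" using v unfolding lightcone_sphere_def by (cases v) auto
    obtain b where wb: "w = (0, b)" using w by (cases w) auto
    have ss: "s \<bullet> s = 1" using v vs unfolding lightcone_sphere_def lor_def by simp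
    have sb: "s \<bullet> b = 0" using w vs wb unfolding lor_def by simp
    define B where "B = b \<bullet> b"
    have B0: "B \<ge> 0" unfolding B_def by simp
    define \<gamma> where "\<gamma> = (\<lambda>t::real. (1::real, (1 + t*t*B) powr (-1/2) *\<^sub>R (s + t *\<^sub>R b)))"
    define S where "S = {-1<..<1::real}"
    have S: "open S" by (simp add: S_def)
    have pos: "1 + t*t*B > 0" for t using B0 by (simp add: add_pos_nonneg)
    have sm: "smooth_on S \<gamma>"
      unfolding smooth_on_def \<gamma>_def
    proof
      fix k
      have q: "Ck_on k S (\<lambda>t. 1 + t*t*B)"
        by (intro Ck_on_add[OF S] Ck_on_mult[OF S] Ck_on_const Ck_on_id)
      show "Ck_on k S (\<lambda>t. (1::real, (1 + t*t*B) powr (-1/2) *\<^sub>R (s + t *\<^sub>R b)))"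
        by (intro Ck_on_pair[OF S] Ck_on_const Ck_on_scaleR[OF S] Ck_on_powr[OF S q pos]
           Ck_on_add[OF S] Ck_on_id)
    qed
    have insph: "\<gamma> t \<in> lightcone_sphere" for t
    proof -
      have n: "(s + t *\<^sub>R b) \<bullet> (s + t *\<^sub>R b) = 1 + t*t*B"
        using ss sb unfolding B_def by (simp add: inner_add_left inner_add_right inner_commute)
      have "snd (\<gamma> t) \<bullet> snd (\<gamma> t) = ((1 + t*t*B) powr (-1/2) * (1 + t*t*B) powr (-1/2)) * (1 + t*t*B)"
        unfolding \<gamma>_def snd_conv inner_scaleR_left inner_scaleR_right n by (simp add: mult.assoc)
      also have "\<dots> = 1" using powr_half_sq[OF pos[of t]] pos[of t] by simp
      finally show ?thesis unfolding lightcone_sphere_def lor_def \<gamma>_def by simp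
    qed
    have "((\<lambda>t. (1 + t*t*B) powr (-1/2) *\<^sub>R (s + t *\<^sub>R b)) has_derivative (\<lambda>h. h *\<^sub>R (0 + b))) (at 0)"
      by (rule norm_curve_deriv) (auto intro!: derivative_eq_intros)
    hence "(\<gamma> has_derivative (\<lambda>h. h *\<^sub>R w)) (at 0)"
      unfolding \<gamma>_def wb using has_derivative_Pair[OF has_derivative_const[of 1]] by fastforce
    hence "vector_derivative \<gamma> (at 0) = w"
      using vector_derivative_at unfolding has_vector_derivative_def by blast
    moreover have "curve_through lightcone_sphere v \<gamma>"
      unfolding curve_through_def using sm insph vs S_def by (auto simp: \<gamma>_def intro!: exI[of _ 1])
    ultimately show "w \<in> tangent_set lightcone_sphere v" unfolding tangent_set_def by blast
  qed
qed


lemma ltilde_deriv: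
  fixes \<nu> :: "real \<Rightarrow> ('n::finite) mink"
  assumes nud: "(\<nu> has_derivative (\<lambda>h. h *\<^sub>R \<nu>')) (at 0)" and c0: "fst (\<nu> 0) \<noteq> 0"
  shows "((\<lambda>t. ltilde (\<nu> t)) has_derivative
     (\<lambda>h. h *\<^sub>R ((1 / fst (\<nu> 0)) *\<^sub>R \<nu>' - (fst \<nu>' / (fst (\<nu> 0))^2) *\<^sub>R \<nu> 0))) (at 0)"
proof -
  have fnd: "((\<lambda>t. fst (\<nu> t)) has_derivative (\<lambda>h. fst (h *\<^sub>R \<nu>'))) (at 0)"
    by (rule has_derivative_fst[OF nud])
  have invd: "((\<lambda>t. inverse (fst (\<nu> t))) has_derivative
      (\<lambda>h. - (inverse (fst (\<nu> 0)) * fst (h *\<^sub>R \<nu>') * inverse (fst (\<nu> 0))))) (at 0)"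
    by (rule Deriv.has_derivative_inverse[OF c0 fnd])
  have "((\<lambda>t. inverse (fst (\<nu> t)) *\<^sub>R \<nu> t) has_derivative
     (\<lambda>h. inverse (fst (\<nu> 0)) *\<^sub>R (h *\<^sub>R \<nu>') + (- (inverse (fst (\<nu> 0)) * fst (h *\<^sub>R \<nu>') * inverse (fst (\<nu> 0)))) *\<^sub>R \<nu> 0)) (at 0)"
    by (rule has_derivative_scaleR[OF invd nud])
  moreover have "(\<lambda>h. inverse (fst (\<nu> 0)) *\<^sub>R (h *\<^sub>R \<nu>') + (- (inverse (fst (\<nu> 0)) * fst (h *\<^sub>R \<nu>') * inverse (fst (\<nu> 0)))) *\<^sub>R \<nu> 0)
      = (\<lambda>h. h *\<^sub>R ((1 / fst (\<nu> 0)) *\<^sub>R \<nu>' - (fst \<nu>' / (fst (\<nu> 0))^2) *\<^sub>R \<nu> 0))"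
    by (auto simp: algebra_simps power2_eq_square divide_inverse)
  ultimately show ?thesis unfolding ltilde_def by (simp add: divide_inverse)
qed

context msec begin

lemma curve_construct:
  assumes fN: "f \<in> nor_space X u0" and fT: "lor f (nT u0) = 0" and fS: "lor f \<xi>0 = 0"
  shows "(1 / cc) *\<^sub>R (DnT a + DnS a + f) - (fst (DnT a + DnS a + f) / cc^2) *\<^sub>R nu0
           \<in> differential_image (N1_bundle U X nT) (LGt U X nT) (X u0, \<xi>0)"
proof -
  obtain r where r: "r > 0" "ball u0 r \<subseteq> V" using V_props(1) u0V open_contains_ball by blast
  define e where "e = r / (norm a + 1)"
  have na: "norm a + 1 > 0" using norm_ge_zero[of a] by linarith
  have e: "e > 0" unfolding e_def using r na by (simp add: divide_pos_pos)
  define S where "S = {-e<..<e::real}"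
  have S: "open S" "0 \<in> S" unfolding S_def using e by auto
  define u where "u = (\<lambda>t::real. u0 + t *\<^sub>R a)"
  have uV: "u t \<in> V" if "t \<in> S" for t
  proof -
    have "norm (t *\<^sub>R a) = \<bar>t\<bar> * norm a" by simp
    also have "\<dots> \<le> \<bar>t\<bar> * (norm a + 1)" by (simp add: mult_left_mono)
    also have "\<dots> < e * (norm a + 1)" using that na unfolding S_def
      by (intro mult_strict_right_mono) auto
    also have "\<dots> = r" unfolding e_def using na by simp
    finally have "dist u0 (u t) < r" unfolding u_def dist_norm by simp
    thus ?thesis using r(2) by auto
  qed
  have uU: "u t \<in> U" if "t \<in> S" for t using uV[OF that] V_props(2) by auto
  have u00: "u 0 = u0" unfolding u_def by simp
  define cs where "cs = (\<lambda>t. cramer_sol (gram (u t)) (\<chi> i. lor (Xj (u t) i) f))"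
  define z1 where "z1 = (\<lambda>t. f - (\<Sum>i\<in>UNIV. cs t $ i *\<^sub>R Xj (u t) i))"
  define z2 where "z2 = (\<lambda>t. z1 t + lor (z1 t) (nT (u t)) *\<^sub>R nT (u t))"
  define \<eta> where "\<eta> = (\<lambda>t. z2 t - lor (z2 t) (nS (u t)) *\<^sub>R nS (u t))"
  define Q where "Q = (\<lambda>t. lor (\<eta> t) (\<eta> t))"
  define \<xi> where "\<xi> = (\<lambda>t. (1 + t*t*Q t) powr (-1/2) *\<^sub>R (nS (u t) + t *\<^sub>R \<eta> t))"
  define \<gamma> where "\<gamma> = (\<lambda>t. (X (u t), \<xi> t))"
  have eta_props: "\<eta> t \<in> nor_space X (u t) \<and> lor (\<eta> t) (nT (u t)) = 0 \<and> lor (\<eta> t) (nS (u t)) = 0"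
    if t: "t \<in> S" for t
  proof -
    have ut: "u t \<in> U" using uU[OF t] .
    have nt: "nT (u t) \<in> nor_space X (u t)" "lor (nT (u t)) (nT (u t)) = -1" using nT_props[OF ut] by auto
    have ns: "nS (u t) \<in> nor_space X (u t)" "lor (nS (u t)) (nS (u t)) = 1" "lor (nS (u t)) (nT (u t)) = 0"
      using V_props(4)[OF uV[OF t]] unfolding N1_def by auto
    have G: "gram (u t) *v cs t = (\<chi> i. lor (Xj (u t) i) f)"
      unfolding cs_def by (rule cramer_sol[OF gram_det[OF ut]])
    have z1e: "z1 t = f - DX (u t) (cs t)" unfolding z1_def DX_expand[OF ut] ..
    have "lor (z1 t) (Xj (u t) j) = 0" for j
    proof -
      have h1: "lor (Xj (u t) j) (DX (u t) (cs t)) = lor (Xj (u t) j) f"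
        using gram_mult[OF ut, of "cs t" j] G by simp
      have "lor (z1 t) (Xj (u t) j) = lor f (Xj (u t) j) - lor (DX (u t) (cs t)) (Xj (u t) j)"
        unfolding z1e by (rule lor_diff_left)
      also have "\<dots> = 0" using h1 lor_sym[of "Xj (u t) j" f] lor_sym[of "Xj (u t) j" "DX (u t) (cs t)"] by simp
      finally show ?thesis .
    qed
    hence z1N: "z1 t \<in> nor_space X (u t)" using nor_iff[OF ut] by blast
    have z2N: "z2 t \<in> nor_space X (u t)" unfolding z2_def by (intro nor_add z1N nor_scale nt)
    have z2T: "lor (z2 t) (nT (u t)) = 0" unfolding z2_def lor_add_left lor_scaleR_left using nt by simp
    have "\<eta> t \<in> nor_space X (u t)" unfolding \<eta>_def by (intro nor_diff z2N nor_scale ns)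
    moreover have "lor (\<eta> t) (nT (u t)) = 0" unfolding \<eta>_def lor_diff_left lor_scaleR_left using z2T ns by simp
    moreover have "lor (\<eta> t) (nS (u t)) = 0" unfolding \<eta>_def lor_diff_left lor_scaleR_left using ns by simp
    ultimately show ?thesis by blast
  qed
  have Qpos: "1 + t*t*Q t > 0" if t: "t \<in> S" for t
  proof -
    have "Q t \<ge> 0" unfolding Q_def
      using timelike_perp(1)[of "nT (u t)" "\<eta> t"] nT_props[OF uU[OF t]] eta_props[OF t] by auto
    thus ?thesis by (simp add: add_pos_nonneg)
  qed
  have xiN1: "\<xi> t \<in> N1 X nT (u t)" if t: "t \<in> S" for t
  proof -
    have ut: "u t \<in> U" using uU[OF t] .
    have ns: "nS (u t) \<in> nor_space X (u t)" "lor (nS (u t)) (nS (u t)) = 1" "lor (nS (u t)) (nT (u t)) = 0"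
      using V_props(4)[OF uV[OF t]] unfolding N1_def by auto
    have ep: "\<eta> t \<in> nor_space X (u t)" "lor (\<eta> t) (nT (u t)) = 0" "lor (\<eta> t) (nS (u t)) = 0"
      using eta_props[OF t] by auto
    define p where "p = (1 + t*t*Q t) powr (-1/2)"
    have pp: "p * p * (1 + t*t*Q t) = 1" unfolding p_def using powr_half_sq[OF Qpos[OF t]] Qpos[OF t] by simp
    have "lor (nS (u t) + t *\<^sub>R \<eta> t) (nS (u t) + t *\<^sub>R \<eta> t) = 1 + t*t*Q t"
      unfolding Q_def lor_add_left lor_add_right lor_scaleR_left lor_scaleR_right
      using ns ep lor_sym[of "nS (u t)" "\<eta> t"] by simp
    hence "lor (\<xi> t) (\<xi> t) = 1" unfolding \<xi>_def p_def[symmetric] using pp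
      by (simp only: lor_scaleR_left lor_scaleR_right)
    moreover have "lor (\<xi> t) (nT (u t)) = 0" unfolding \<xi>_def lor_scaleR_left lor_add_left using ns ep by simp
    moreover have "\<xi> t \<in> nor_space X (u t)" unfolding \<xi>_def by (intro nor_scale nor_add ns ep)
    ultimately show ?thesis unfolding N1_def by blast
  qed
  have cs0: "cs 0 = 0"
  proof -
    have "gram u0 *v cs 0 = 0"
      using cramer_sol[OF gram_det[OF u0]] nor_iff[OF u0] fN lor_sym[of "Xj u0 _" f]
      unfolding cs_def u00 by (simp add: vec_eq_iff)
    thus ?thesis using det_zero_iff[of "gram u0"] gram_det[OF u0] by auto
  qed
  have eta0: "\<eta> 0 = f"
    unfolding \<eta>_def z2_def z1_def using cs0 u00 fT fS nS0 by simp
  have xi0': "\<xi> 0 = \<xi>0" unfolding \<xi>_def using u00 nS0 by simp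
  have ckall: "Ck_on k S \<gamma> \<and> Ck_on k S \<eta> \<and> Ck_on k S Q" for k
  proof -
    have cX: "Ck_on k S (\<lambda>t. X (u t))" unfolding u_def
      by (rule Ck_on_affine[OF S(1) openU _ CkX]) (use uU in \<open>auto simp: u_def\<close>)
    have cnT: "Ck_on k S (\<lambda>t. nT (u t))" unfolding u_def
      by (rule Ck_on_affine[OF S(1) openU]) (use uU fnT in \<open>auto simp: u_def future_unit_timelike_normal_def smooth_on_def\<close>)
    have cnS: "Ck_on k S (\<lambda>t. nS (u t))" unfolding u_def
      by (rule Ck_on_affine[OF S(1) V_props(1)]) (use uV V_props(3) in \<open>auto simp: u_def smooth_on_def\<close>)
    have cXj: "Ck_on k S (\<lambda>t. Xj (u t) i)" for i unfolding u_def
    proof (rule Ck_on_affine[OF S(1) openU])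
      show "Ck_on k U (\<lambda>x. Xj x i)" using CkX[of "Suc k"] unfolding Xj_def by simp
    qed (use uU in \<open>auto simp: u_def\<close>)
    have blor: "Ck_on k S (\<lambda>t. lor (F t) (H t))" if "Ck_on k S F" "Ck_on k S H" for F H
      by (rule Ck_on_bilinear[OF S(1) bounded_bilinear_lor that])
    have cG: "Ck_on k S (\<lambda>t. gram (u t) $ i $ j)" for i j
      unfolding gram_def by (simp add: blor cXj)
    have cdG: "Ck_on k S (\<lambda>t. det (gram (u t)))" by (rule Ck_on_det[OF S(1) cG])
    have cb: "Ck_on k S (\<lambda>t. lor (Xj (u t) i) f)" for i by (rule blor[OF cXj Ck_on_const])
    have cdM: "Ck_on k S (\<lambda>t. det (\<chi> i j. if j = m then lor (Xj (u t) i) f else gram (u t) $ i $ j))" for m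
      by (rule Ck_on_det[OF S(1)]) (case_tac "j = m", simp_all add: cb cG)
    have dpos: "det (gram (u t)) * det (gram (u t)) > 0" if t: "t \<in> S" for t
    proof -
      have "det (gram (u t)) \<noteq> 0" using gram_det[OF uU[OF t]] .
      thus ?thesis by (simp add: zero_less_mult_iff linorder_neq_iff disj_commute)
    qed
    have ccs: "Ck_on k S (\<lambda>t. cs t $ m)" for m
    proof -
      have eq: "cs t $ m = det (\<chi> i j. if j = m then lor (Xj (u t) i) f else gram (u t) $ i $ j)
                 * det (gram (u t)) * (det (gram (u t)) * det (gram (u t))) powr (-1)" if t: "t \<in> S" for t
      proof -
        have d: "det (gram (u t)) \<noteq> 0" using gram_det[OF uU[OF t]] .
        have "(det (gram (u t)) * det (gram (u t))) powr (-1) = 1 / (det (gram (u t)) * det (gram (u t)))"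
          using d by (simp add: powr_minus_divide)
        moreover have "(\<chi> i j. if j = m then (\<chi> i. lor (Xj (u t) i) f) $ i else gram (u t) $ i $ j)
           = (\<chi> i j. if j = m then lor (Xj (u t) i) f else gram (u t) $ i $ j)" by (simp add: vec_eq_iff)
        ultimately show ?thesis unfolding cs_def cramer_sol_def using d by simp
      qed
      have "Ck_on k S (\<lambda>t. det (\<chi> i j. if j = m then lor (Xj (u t) i) f else gram (u t) $ i $ j)
                 * det (gram (u t)) * (det (gram (u t)) * det (gram (u t))) powr (-1))"
        apply (intro Ck_on_mult[OF S(1)] cdM cdG)
        apply (rule Ck_on_powr[OF S(1) Ck_on_mult[OF S(1) cdG cdG]])
        by (rule dpos)
      thus ?thesis by (rule Ck_on_cong_aux[OF S(1), rotated]) (use eq in simp)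
    qed
    have cz1: "Ck_on k S z1" unfolding z1_def
      by (intro Ck_on_diff[OF S(1)] Ck_on_const Ck_on_sum[OF S(1)] Ck_on_scaleR[OF S(1)] ccs cXj) simp
    have cz2: "Ck_on k S z2" unfolding z2_def
      by (intro Ck_on_add[OF S(1)] cz1 Ck_on_scaleR[OF S(1)] blor cnT)
    have ceta: "Ck_on k S \<eta>" unfolding \<eta>_def
      by (intro Ck_on_diff[OF S(1)] cz2 Ck_on_scaleR[OF S(1)] blor cnS)
    have cQ: "Ck_on k S Q" unfolding Q_def by (rule blor[OF ceta ceta])
    have cq: "Ck_on k S (\<lambda>t. 1 + t*t*Q t)"
      by (intro Ck_on_add[OF S(1)] Ck_on_mult[OF S(1)] Ck_on_const Ck_on_id cQ)
    have cxi: "Ck_on k S \<xi>" unfolding \<xi>_def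
      by (intro Ck_on_scaleR[OF S(1)] Ck_on_powr[OF S(1) cq Qpos] Ck_on_add[OF S(1)] cnS ceta Ck_on_id)
    have "Ck_on k S \<gamma>" unfolding \<gamma>_def by (rule Ck_on_pair[OF S(1) cX cxi])
    thus ?thesis using ceta cQ by blast
  qed
  have ck: "Ck_on k S \<gamma>" for k using ckall by blast
  have ct: "curve_through (N1_bundle U X nT) (X u0, \<xi>0) \<gamma>"
    unfolding curve_through_def
  proof (intro conjI exI[of _ e])
    show "e > 0" by (rule e)
    show "smooth_on {-e<..<e} \<gamma>" using ck unfolding smooth_on_def S_def by blast
    show "\<gamma> ` {-e<..<e} \<subseteq> N1_bundle U X nT"
      unfolding N1_bundle_def \<gamma>_def using uU xiN1 S_def by blast
    show "\<gamma> 0 = (X u0, \<xi>0)" unfolding \<gamma>_def using u00 xi0' by simp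
  qed
  have ud: "(u has_derivative (\<lambda>h. h *\<^sub>R a)) (at 0)"
    unfolding u_def by (auto intro!: derivative_eq_intros)
  have d1: "(F has_derivative frechet_derivative F (at 0)) (at 0)" if "\<And>k. Ck_on k S F" for F :: "real \<Rightarrow> 'z::real_normed_vector"
    using Ck_on_SucD[OF S(1) that[of "Suc 0"] S(2)] .
  have smooth_parts: "Ck_on k S \<eta> \<and> Ck_on k S Q" for k
    using ckall by blast
  have etad: "(\<eta> has_derivative frechet_derivative \<eta> (at 0)) (at 0)" using d1 smooth_parts by blast
  have Qd: "(Q has_derivative frechet_derivative Q (at 0)) (at 0)" using d1 smooth_parts by blast
  have nSd0: "(nS has_derivative DnS) (at (u 0))" using nS_d u00 by simp
  have nSu: "((\<lambda>t. nS (u t)) has_derivative (\<lambda>h. h *\<^sub>R DnS a)) (at 0)"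
    using has_derivative_compose[OF ud nSd0] linear_scale[OF lin_DnS] by simp
  have xid: "(\<xi> has_derivative (\<lambda>h. h *\<^sub>R (DnS a + f))) (at 0)"
    unfolding \<xi>_def using norm_curve_deriv[OF nSu etad Qd] eta0 by simp
  have nTd0: "(nT has_derivative DnT) (at (u 0))" using nT_d u00 by simp
  have nTu: "((\<lambda>t. nT (u t)) has_derivative (\<lambda>h. h *\<^sub>R DnT a)) (at 0)"
    using has_derivative_compose[OF ud nTd0] linear_scale[OF lin_DnT] by simp
  define \<nu> where "\<nu> = (\<lambda>t. nT (u t) + \<xi> t)"
  have nud: "(\<nu> has_derivative (\<lambda>h. h *\<^sub>R (DnT a + DnS a + f))) (at 0)"
    unfolding \<nu>_def using has_derivative_add[OF nTu xid] by (simp add: scaleR_add_right add.assoc)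
  have nu00: "\<nu> 0 = nu0" unfolding \<nu>_def nu0_def using u00 xi0' by simp
  have c0: "fst (\<nu> 0) \<noteq> 0" using nu00 nu0_props(3) cc_def by simp
  have ld: "((\<lambda>t. ltilde (\<nu> t)) has_derivative
     (\<lambda>h. h *\<^sub>R ((1 / cc) *\<^sub>R (DnT a + DnS a + f) - (fst (DnT a + DnS a + f) / cc^2) *\<^sub>R nu0))) (at 0)"
    using ltilde_deriv[OF nud c0] nu00 cc_def by simp
  have eqS: "LGt U X nT (\<gamma> t) = ltilde (\<nu> t)" if "t \<in> S" for t
    unfolding LGt_def \<gamma>_def \<nu>_def using inv_X[OF uU[OF that]] by simp
  have "((LGt U X nT \<circ> \<gamma>) has_derivative
     (\<lambda>h. h *\<^sub>R ((1 / cc) *\<^sub>R (DnT a + DnS a + f) - (fst (DnT a + DnS a + f) / cc^2) *\<^sub>R nu0))) (at 0)"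
    by (rule has_derivative_transform_within_open[OF ld S]) (use eqS in simp)
  hence "vector_derivative (LGt U X nT \<circ> \<gamma>) (at 0) =
      (1 / cc) *\<^sub>R (DnT a + DnS a + f) - (fst (DnT a + DnS a + f) / cc^2) *\<^sub>R nu0"
    using vector_derivative_at unfolding has_vector_derivative_def by blast
  note vd = this
  show ?thesis unfolding differential_image_def
    apply (rule CollectI) apply (rule exI[where x=\<gamma>]) apply (rule conjI)
     apply (rule vd[symmetric])
    by (rule ct)
qed

end

context msec begin

lemma regular_iff:
  "regular_point (N1_bundle U X nT) lightcone_sphere (LGt U X nT) (X u0, \<xi>0) \<longleftrightarrow> det Ash \<noteq> 0"
proof -
  define v0 where "v0 = LGt U X nT (X u0, \<xi>0)"
  have v0e: "v0 = (1/cc) *\<^sub>R nu0" unfolding v0_def by (rule v0_eq)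
  have v0s: "v0 \<in> lightcone_sphere"
    unfolding v0_def LGt_def using inv_X[OF u0] point_sphere(4)[OF u0 xi0] by simp
  define TS where "TS = {w. fst w = 0 \<and> lor v0 w = 0}"
  have tsph: "tangent_set lightcone_sphere v0 = TS" unfolding TS_def by (rule tangent_sphere[OF v0s])
  define DI where "DI = differential_image (N1_bundle U X nT) (LGt U X nT) (X u0, \<xi>0)"
  have DIc: "\<exists>a. w - DX u0 ((- (1/cc)) *\<^sub>R (Ash *v a)) \<in> nor_space X u0 \<and> w \<in> TS" if w: "w \<in> DI" for w
  proof -
    obtain \<gamma> where g: "w = vector_derivative (LGt U X nT \<circ> \<gamma>) (at 0)"
      "curve_through (N1_bundle U X nT) (X u0, \<xi>0) \<gamma>"
      using w unfolding DI_def differential_image_def by blast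
    obtain e where e: "e > 0" "smooth_on {-e<..<e} \<gamma>" "\<gamma> ` {-e<..<e} \<subseteq> N1_bundle U X nT" "\<gamma> 0 = (X u0, \<xi>0)"
      using g(2) unfolding curve_through_def by blast
    obtain w' a where wa: "((\<lambda>t. LGt U X nT (\<gamma> t)) has_vector_derivative w') (at 0)"
      "\<forall>t\<in>{-e<..<e}. LGt U X nT (\<gamma> t) \<in> lightcone_sphere"
      "w' - DX u0 ((- (1/cc)) *\<^sub>R (Ash *v a)) \<in> nor_space X u0"
      using curve_deriv[OF e] by blast
    have "w = w'" using g(1) vector_derivative_at[OF wa(1)] by (simp add: comp_def)
    moreover have "fst w' = 0 \<and> lor (LGt U X nT (\<gamma> 0)) w' = 0"
      by (rule sphere_deriv_TS[OF e(1)]) (use wa in \<open>auto simp: has_vector_derivative_def\<close>)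
    ultimately show ?thesis using wa(3) e(4) unfolding TS_def v0_def by auto
  qed
  have DI_TS: "DI \<subseteq> TS" using DIc by blast
  have reg: "regular_point (N1_bundle U X nT) lightcone_sphere (LGt U X nT) (X u0, \<xi>0) \<longleftrightarrow> TS \<subseteq> DI"
    unfolding regular_point_def DI_def[symmetric] v0_def[symmetric] tsph using DI_TS by blast
  have nu0w: "lor nu0 w = 0" if "w \<in> TS" for w
  proof -
    have "lor v0 w = 0" using that unfolding TS_def by simp
    thus ?thesis using v0e nu0_props(3) by (simp add: lor_simps)
  qed
  have fnu0: "fst nu0 = cc" unfolding cc_def ..
  show ?thesis unfolding reg
  proof
    assume sub: "TS \<subseteq> DI"
    show "det Ash \<noteq> 0"
    proof
      assume d: "det Ash = 0"
      have "\<not> surj ((*v) Ash)"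
      proof
        assume "surj ((*v) Ash)"
        hence "invertible Ash" unfolding invertible_right_inverse
          using matrix_right_invertible_surjective by blast
        thus False using d invertible_det_nz by blast
      qed
      then obtain z where z: "\<And>a. Ash *v a \<noteq> z" unfolding surj_def by (auto simp: eq_commute)
      define ws where "ws = DX u0 z - (fst (DX u0 z) / cc) *\<^sub>R nu0"
      have "lor nu0 (DX u0 z) = 0" using nu0_props(4) unfolding nor_space_def tan_space_def by blast
      hence "ws \<in> TS" unfolding TS_def ws_def v0e using nu0_props(1,3) fnu0
        by (simp add: lor_simps)
      hence "ws \<in> DI" using sub by blast
      then obtain a where a: "ws - DX u0 ((- (1/cc)) *\<^sub>R (Ash *v a)) \<in> nor_space X u0" using DIc by blast
      have "DX u0 z - DX u0 ((- (1/cc)) *\<^sub>R (Ash *v a)) \<in> nor_space X u0"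
        using nor_add[OF a nor_scale[OF nu0_props(4), of "fst (DX u0 z) / cc"]] unfolding ws_def
        by (simp add: algebra_simps)
      moreover have "DX u0 z - DX u0 ((- (1/cc)) *\<^sub>R (Ash *v a)) = DX u0 (z - (- (1/cc)) *\<^sub>R (Ash *v a))"
        by (rule linear_diff[OF linear_DX[OF u0], symmetric])
      ultimately have nn: "DX u0 (z - (- (1/cc)) *\<^sub>R (Ash *v a)) \<in> nor_space X u0" by simp
      have "DX u0 (z - (- (1/cc)) *\<^sub>R (Ash *v a)) \<in> tan_space X u0" unfolding tan_space_def by blast
      hence "DX u0 (z - (- (1/cc)) *\<^sub>R (Ash *v a)) = 0" using tan_nor_zero[OF u0 _ nn] by blast
      hence "z - (- (1/cc)) *\<^sub>R (Ash *v a) = 0" using DX_zero[OF u0] by blast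
      hence "z = (- (1/cc)) *\<^sub>R (Ash *v a)" by (simp only: right_minus_eq)
      also have "\<dots> = Ash *v ((- (1/cc)) *\<^sub>R a)" by (rule matrix_vector_mult_scaleR[symmetric])
      finally show False using z[of "(- (1/cc)) *\<^sub>R a"] by simp
    qed
  next
    assume d: "det Ash \<noteq> 0"
    show "TS \<subseteq> DI"
    proof
      fix w assume w: "w \<in> TS"
      obtain z where z: "w - DX u0 z \<in> nor_space X u0" using proj_exists[OF u0] by blast
      define a where "a = cramer_sol Ash ((- cc) *\<^sub>R z)"
      have Aa: "Ash *v a = (- cc) *\<^sub>R z" unfolding a_def by (rule cramer_sol[OF d])
      define D where "D = DnT a + DnS a"
      define \<kappa> where "\<kappa> = lor (cc *\<^sub>R w - D) (nT u0)"
      define f where "f = cc *\<^sub>R w + \<kappa> *\<^sub>R nu0 - D"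
      have DXA: "DX u0 (- (Ash *v a)) = cc *\<^sub>R DX u0 z"
        using Aa linear_scale[OF linear_DX[OF u0]] by simp
      have "f = cc *\<^sub>R (w - DX u0 z) + \<kappa> *\<^sub>R nu0 - (D - DX u0 (- (Ash *v a)))"
        unfolding f_def DXA by (simp add: algebra_simps)
      hence fN: "f \<in> nor_space X u0"
        using proj_DnuS[of a] unfolding D_def[symmetric]
        by (auto intro!: nor_diff nor_add nor_scale z nu0_props(4))
      have fT: "lor f (nT u0) = 0"
        unfolding f_def \<kappa>_def using nu0_props(2) by (simp add: lor_simps)
      have fnu: "lor f nu0 = 0"
        unfolding f_def D_def using nu0w[OF w] nu0_props(1) lor_nu0_DnuS[of a]
        by (simp add: lor_simps lor_sym[of w nu0] lor_sym[of "DnT a" nu0] lor_sym[of "DnS a" nu0])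
      have fS: "lor f \<xi>0 = 0"
      proof -
        have "lor f \<xi>0 = lor f (nu0 - nT u0)" unfolding nu0_def by simp
        also have "\<dots> = 0" unfolding lor_diff_right using fT fnu by simp
        finally show ?thesis .
      qed
      have mem: "(1 / cc) *\<^sub>R (DnT a + DnS a + f) - (fst (DnT a + DnS a + f) / cc^2) *\<^sub>R nu0 \<in> DI"
        unfolding DI_def by (rule curve_construct[OF fN fT fS])
      have "DnT a + DnS a + f = cc *\<^sub>R w + \<kappa> *\<^sub>R nu0" unfolding f_def D_def by simp
      moreover have "fst w = 0" using w unfolding TS_def by simp
      ultimately have "(1 / cc) *\<^sub>R (DnT a + DnS a + f) - (fst (DnT a + DnS a + f) / cc^2) *\<^sub>R nu0 = w"
        using nu0_props(3) fnu0 by (simp add: algebra_simps power2_eq_square)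
      thus "w \<in> DI" using mem by simp
    qed
  qed
qed

end

theorem proposition5p1:
  fixes U :: "(real^'s) set" and X :: "real^'s \<Rightarrow> real \<times> (real^'n)"
    and nT :: "real^'s \<Rightarrow> real \<times> (real^'n)"
    and u0 :: "real^'s" and v0 :: "real \<times> (real^'n)"
  assumes "open U"
    and "spacelike_embedding U X"
    and "future_unit_timelike_normal U X nT"
    and "u0 \<in> U"
    and "v0 \<in> lightcone_sphere"
  shows "((\<forall>i. pderiv (\<lambda>u. lor (X u) v0) u0 i = 0) \<longleftrightarrow>
           (\<exists>\<xi>0\<in>N1 X nT u0. v0 = LGt U X nT (X u0, \<xi>0))) \<and>
         (\<forall>\<xi>0 V nS. \<xi>0 \<in> N1 X nT u0 \<and> v0 = LGt U X nT (X u0, \<xi>0) \<and>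
           local_section U X nT V nS \<and> u0 \<in> V \<and> nS u0 = \<xi>0 \<longrightarrow>
           (K_ell X nT nS u0 = 0 \<longleftrightarrow> det (hessian (\<lambda>u. lor (X u) v0) u0) = 0) \<and>
           (flat_umbilical X nT nS u0 \<longleftrightarrow> rank (hessian (\<lambda>u. lor (X u) v0) u0) = 0) \<and>
           (nondegenerate_critical_point (\<lambda>u. lor (X u) v0) u0 \<longleftrightarrow>
              regular_point (N1_bundle U X nT) lightcone_sphere (LGt U X nT) (X u0, \<xi>0)))"
proof -
  interpret msetup U X nT using assms(1,2,3) by unfold_locales
  have P1: "(\<forall>i. pderiv (\<lambda>u. lor (X u) v0) u0 i = 0) \<longleftrightarrow>
           (\<exists>\<xi>0\<in>N1 X nT u0. v0 = LGt U X nT (X u0, \<xi>0))"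
    by (rule part1[OF assms(4,5)])
  have fv0: "fst v0 = 1" using assms(5) unfolding lightcone_sphere_def by simp
  have P2: "(K_ell X nT nS u0 = 0 \<longleftrightarrow> det (hessian (\<lambda>u. lor (X u) v0) u0) = 0) \<and>
           (flat_umbilical X nT nS u0 \<longleftrightarrow> rank (hessian (\<lambda>u. lor (X u) v0) u0) = 0) \<and>
           (nondegenerate_critical_point (\<lambda>u. lor (X u) v0) u0 \<longleftrightarrow>
              regular_point (N1_bundle U X nT) lightcone_sphere (LGt U X nT) (X u0, \<xi>0))"
    if h: "\<xi>0 \<in> N1 X nT u0 \<and> v0 = LGt U X nT (X u0, \<xi>0) \<and>
           local_section U X nT V nS \<and> u0 \<in> V \<and> nS u0 = \<xi>0" for \<xi>0 V nS
  proof -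
    interpret msec U X nT u0 \<xi>0 V nS
      by unfold_locales (use h assms(4) in auto)
    have p23: "(K_ell X nT nS u0 = 0 \<longleftrightarrow> det (hessian (\<lambda>u. lor (X u) v0) u0) = 0) \<and>
         (flat_umbilical X nT nS u0 \<longleftrightarrow> rank (hessian (\<lambda>u. lor (X u) v0) u0) = 0)"
      by (rule parts23[OF assms(4) _ _ fv0]) (use h in auto)
    have crit: "\<forall>i. pderiv (\<lambda>u. lor (X u) v0) u0 i = 0" using P1 h by blast
    have nuSe: "nuS = (\<lambda>x. nT x + nS x)" by (rule ext) (simp add: nuS_def)
    have Ke: "K_ell X nT nS u0 = det Ash" unfolding K_ell_def Ash_def nuSe ..
    have "nondegenerate_critical_point (\<lambda>u. lor (X u) v0) u0 \<longleftrightarrow> det Ash \<noteq> 0"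
      unfolding nondegenerate_critical_point_def using crit p23 Ke by simp
    also have "\<dots> \<longleftrightarrow> regular_point (N1_bundle U X nT) lightcone_sphere (LGt U X nT) (X u0, \<xi>0)"
      using regular_iff by simp
    finally show ?thesis using p23 by simp
  qed
  show ?thesis using P1 P2 by blast
qed


end
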